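(* Let $n\ge2$, let $I\subseteq[0,\infty)$ be an interval with non-empty interior, let $\tilde{\mathbf{P}}\colon I\to\mathbb{R}^n$ be a generalized $n$-system and let $\epsilon>0$. Then there exists an $n$-system $\mathbf{P}$ on $I$ such that $\|\tilde{\mathbf{P}}(q)-\mathbf{P}(q)\|_\infty\le\epsilon$ for every $q\in I$.
   Context: Let $I\subseteq[0,\infty)$ be an interval with non-empty interior. A map $\mathbf{P}\colon I\to\mathbb{R}^n$ is continuous piecewise linear if it is continuous, the set $D$ of points of $I$ where it is not differentiable (including the endpoints of $I$ that lie in $I$) is discrete in $I$, and its derivative is locally constant on $I\setminus D$. An $n$-system on $I$ is a continuous piecewise linear map $\mathbf{P}=(P_1,\dots,P_n)\colon I\to\mathbb{R}^n$ such that: (S1) for each $q\in I$, $0\le P_1(q)\le\cdots\le P_n(q)$ and $P_1(q)+\cdots+P_n(q)=q$; (S2) on each non-empty open subinterval $H$ of $I$ on which $\mathbf{P}$ is differentiable, there is $r\in\{1,\dots,n\}$ such that $P_r$ has slope $1$ on $H$ and all $P_j$ with $j\ne r$ are constant on $H$; (S3) if $q$ is an interior point of $I$ where $\mathbf{P}$ is not differentiable and the integers $r,s$ with $P_r'(q^-)=P_s'(q^+)=1$ satisfy $r<s$, then $P_r(q)=P_{r+1}(q)=\cdots=P_s(q)$. A generalized $n$-system on $I$ is a continuous piecewise linear map $\mathbf{P}=(P_1,\dots,P_n)\colon I\to\mathbb{R}^n$ such that: (G1) for each $q\in I$, $0\le P_1(q)\le\cdots\le P_n(q)$ and $P_1(q)+\cdots+P_n(q)=q$;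 (G2) on each non-empty open subinterval $H$ of $I$ on which $\mathbf{P}$ is differentiable, there are integers $1\le \underline{r}\le\overline{r}\le n$ such that $P_{\underline r},\dots,P_{\overline r}$ coincide on $H$ and have slope $1/(\overline r-\underline r+1)$, while every other $P_j$ is constant on $H$; (G3) if $q$ is an interior point of $I$ where $\mathbf{P}$ is not differentiable, and $\underline r,\overline r,\underline s,\overline s$ are the integers with $P_j'(q^-)=1/(\overline r-\underline r+1)$ for $\underline r\le j\le\overline r$ and $P_j'(q^+)=1/(\overline s-\underline s+1)$ for $\underline s\le j\le \overline s$ (as in (G2) on the adjacent intervals), and if $\underline r<\overline s$, then $P_{\underline r}(q)=P_{\underline r+1}(q)=\cdots=P_{\overline s}(q)$. *)

theory Defs
  imports "HOL-Analysis.Analysis"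
begin

text \<open>A map I -> R^n is represented as P :: real => nat => real, with components
  P q 1, ..., P q n (indices outside 1..n are irrelevant).\<close>

definition nondiff_set :: "nat \<Rightarrow> real set \<Rightarrow> (real \<Rightarrow> nat \<Rightarrow> real) \<Rightarrow> real set" where
  "nondiff_set n I P = {q \<in> I. q \<notin> interior I \<or>
      (\<exists>j\<in>{1..n}. \<not> ((\<lambda>t. P t j) differentiable (at q)))}"

definition cont_piecewise_linear :: "nat \<Rightarrow> real set \<Rightarrow> (real \<Rightarrow> nat \<Rightarrow> real) \<Rightarrow> bool" where
  "cont_piecewise_linear n I P \<longleftrightarrow>
     (\<forall>j\<in>{1..n}. continuous_on I (\<lambda>t. P t j)) \<and>
     \<comment> \<open>D is discrete in I\<close>
     (\<forall>q\<in>I. \<exists>e>0. \<forall>x\<in>nondiff_set n I P. \<bar>x - q\<bar> < e \<longrightarrow> x = q) \<and>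
     \<comment> \<open>derivative locally constant on I - D\<close>
     (\<forall>q\<in>I - nondiff_set n I P. \<exists>e>0. \<forall>x\<in>I - nondiff_set n I P. \<bar>x - q\<bar> < e \<longrightarrow>
        (\<forall>j\<in>{1..n}. deriv (\<lambda>t. P t j) x = deriv (\<lambda>t. P t j) q))"

definition sys_cond1 :: "nat \<Rightarrow> real set \<Rightarrow> (real \<Rightarrow> nat \<Rightarrow> real) \<Rightarrow> bool" where
  "sys_cond1 n I P \<longleftrightarrow>
     (\<forall>q\<in>I. 0 \<le> P q 1 \<and> (\<forall>j\<in>{1..<n}. P q j \<le> P q (Suc j)) \<and> (\<Sum>j=1..n. P q j) = q)"

definition diff_subinterval :: "nat \<Rightarrow> real set \<Rightarrow> (real \<Rightarrow> nat \<Rightarrow> real) \<Rightarrow> real set \<Rightarrow> bool" where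
  "diff_subinterval n I P H \<longleftrightarrow> H \<subseteq> I \<and> open H \<and> is_interval H \<and> H \<noteq> {} \<and>
     (\<forall>x\<in>H. \<forall>j\<in>{1..n}. (\<lambda>t. P t j) differentiable (at x))"

definition n_system :: "nat \<Rightarrow> real set \<Rightarrow> (real \<Rightarrow> nat \<Rightarrow> real) \<Rightarrow> bool" where
  "n_system n I P \<longleftrightarrow>
     cont_piecewise_linear n I P \<and> sys_cond1 n I P \<and>
     \<comment> \<open>(S2)\<close>
     (\<forall>H. diff_subinterval n I P H \<longrightarrow>
        (\<exists>r\<in>{1..n}. \<forall>x\<in>H. \<forall>j\<in>{1..n}.
            ((\<lambda>t. P t j) has_real_derivative (if j = r then 1 else 0)) (at x))) \<and>
     \<comment> \<open>(S3)\<close>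
     (\<forall>q\<in>interior I \<inter> nondiff_set n I P. \<forall>r\<in>{1..n}. \<forall>s\<in>{1..n}.
        ((\<lambda>t. P t r) has_real_derivative 1) (at_left q) \<and>
        ((\<lambda>t. P t s) has_real_derivative 1) (at_right q) \<and> r < s \<longrightarrow>
        (\<forall>j\<in>{r..s}. P q j = P q r))"

definition gen_n_system :: "nat \<Rightarrow> real set \<Rightarrow> (real \<Rightarrow> nat \<Rightarrow> real) \<Rightarrow> bool" where
  "gen_n_system n I P \<longleftrightarrow>
     cont_piecewise_linear n I P \<and> sys_cond1 n I P \<and>
     \<comment> \<open>(G2)\<close>
     (\<forall>H. diff_subinterval n I P H \<longrightarrow>
        (\<exists>rl rh. 1 \<le> rl \<and> rl \<le> rh \<and> rh \<le> n \<and>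
           (\<forall>x\<in>H. \<forall>j\<in>{rl..rh}. P x j = P x rl) \<and>
           (\<forall>x\<in>H. \<forall>j\<in>{1..n}.
              ((\<lambda>t. P t j) has_real_derivative
                 (if rl \<le> j \<and> j \<le> rh then 1 / real (rh - rl + 1) else 0)) (at x)))) \<and>
     \<comment> \<open>(G3)\<close>
     (\<forall>q\<in>interior I \<inter> nondiff_set n I P. \<forall>rl rh sl sh.
        1 \<le> rl \<and> rl \<le> rh \<and> rh \<le> n \<and> 1 \<le> sl \<and> sl \<le> sh \<and> sh \<le> n \<and>
        (\<forall>j\<in>{1..n}. ((\<lambda>t. P t j) has_real_derivative
            (if rl \<le> j \<and> j \<le> rh then 1 / real (rh - rl + 1) else 0)) (at_left q)) \<and>
        (\<forall>j\<in>{1..n}. ((\<lambda>t. P t j) has_real_derivative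
            (if sl \<le> j \<and> j \<le> sh then 1 / real (sh - sl + 1) else 0)) (at_right q)) \<and>
        rl < sh \<longrightarrow>
        (\<forall>j\<in>{rl..sh}. P q j = P q rl))"

end

theory Submission
  imports Defs
begin


definition local_ok :: "nat \<Rightarrow> real set \<Rightarrow> (real \<Rightarrow> nat \<Rightarrow> real) \<Rightarrow> real \<Rightarrow> bool" where
 "local_ok n I P x \<longleftrightarrow> (\<exists>e>0. \<exists>\<alpha> \<beta>. (\<forall>j\<in>{1..n}. \<alpha> j \<in> {0,1} \<and> \<beta> j \<in> {0,1}) \<and>
   (\<forall>y\<in>I. x - e < y \<and> y \<le> x \<longrightarrow> (\<forall>j\<in>{1..n}. P y j = P x j + \<alpha> j * (y - x))) \<and>
   (\<forall>y\<in>I. x \<le> y \<and> y < x + e \<longrightarrow> (\<forall>j\<in>{1..n}. P y j = P x j + \<beta> j * (y - x))) \<and>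
   (x \<in> interior I \<longrightarrow> (\<forall>a\<in>{1..n}. \<forall>b\<in>{1..n}. \<alpha> a = 1 \<and> \<beta> b = 1 \<and> a < b \<longrightarrow>
        (\<forall>j\<in>{a..b}. P x j = P x a))))"


lemma local_okE:
  assumes "local_ok n I P x"
  obtains e \<alpha> \<beta> where "e > 0" "\<forall>j\<in>{1..n}. \<alpha> j \<in> {0,1} \<and> \<beta> j \<in> {0,1}"
   "\<forall>y\<in>I. x - e < y \<and> y \<le> x \<longrightarrow> (\<forall>j\<in>{1..n}. P y j = P x j + \<alpha> j * (y - x))"
   "\<forall>y\<in>I. x \<le> y \<and> y < x + e \<longrightarrow> (\<forall>j\<in>{1..n}. P y j = P x j + \<beta> j * (y - x))"
   "x \<in> interior I \<longrightarrow> (\<forall>a\<in>{1..n}. \<forall>b\<in>{1..n}. \<alpha> a = 1 \<and> \<beta> b = 1 \<and> a < b \<longrightarrow>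
        (\<forall>j\<in>{a..b}. P x j = P x a))"
  using assms unfolding local_ok_def
  apply (elim exE conjE)
  apply (rule that)
  apply assumption+
  done

lemma deriv_left_affine:
  fixes f :: "real \<Rightarrow> real"
  assumes "e > 0" "\<And>y. x - e < y \<Longrightarrow> y < x \<Longrightarrow> f y = f x + s * (y - x)"
  shows "(f has_real_derivative s) (at_left x)"
  unfolding has_field_derivative_iff
proof (rule tendsto_eventually)
  show "\<forall>\<^sub>F y in at_left x. (f y - f x) / (y - x) = s"
    using eventually_at_left_real[of "x - e" x] assms by (auto elim!: eventually_mono)
qed

lemma deriv_right_affine:
  fixes f :: "real \<Rightarrow> real"
  assumes "e > 0" "\<And>y. x < y \<Longrightarrow> y < x + e \<Longrightarrow> f y = f x + s * (y - x)"
  shows "(f has_real_derivative s) (at_right x)"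
  unfolding has_field_derivative_iff
proof (rule tendsto_eventually)
  show "\<forall>\<^sub>F y in at_right x. (f y - f x) / (y - x) = s"
    using eventually_at_right_real[of x "x + e"] assms by (auto elim!: eventually_mono)
qed

lemma deriv_open_affine:
  fixes f :: "real \<Rightarrow> real"
  assumes "open S" "y \<in> S" "\<And>z. z \<in> S \<Longrightarrow> f z = c + s * z"
  shows "(f has_real_derivative s) (at y)"
proof -
  have "((\<lambda>z. c + s * z) has_real_derivative s) (at y)"
    by (auto intro!: derivative_eq_intros)
  thus ?thesis by (rule has_field_derivative_transform_within_open[OF _ assms(1,2)]) (use assms(3) in auto)
qed

lemma interval_near_interior:
  fixes I :: "real set"
  assumes "is_interval I" "x \<in> I"
  shows "\<exists>e>0. \<forall>y\<in>I. y \<noteq> x \<and> \<bar>y - x\<bar> < e \<longrightarrow> y \<in> interior I"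
proof -
  have key: "y \<in> interior I" if "a \<in> I" "b \<in> I" "a < y" "y < b" for a b y
  proof -
    have "{a<..<b} \<subseteq> I"
    proof
      fix y assume "y \<in> {a<..<b}"
      hence "a \<le> y" "y \<le> b" by auto
      thus "y \<in> I" using assms(1)[unfolded is_interval_1] that(1,2) by blast
    qed
    hence "{a<..<b} \<subseteq> interior I" by (intro interior_maximal) auto
    thus ?thesis using that by auto
  qed
  obtain e1 where e1: "e1 > 0" "\<forall>y\<in>I. x < y \<and> y < x + e1 \<longrightarrow> y \<in> interior I"
  proof (cases "\<exists>m\<in>I. x < m \<and> (\<forall>z\<in>I. z \<le> m)")
    case True
    then obtain m where m: "m \<in> I" "x < m" "\<forall>z\<in>I. z \<le> m" by blast
    show ?thesis by (rule that[of "m - x"]) (use m key[of x m] assms(2) in auto)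
  next
    case False
    show ?thesis
    proof (rule that[of 1])
      show "\<forall>y\<in>I. x < y \<and> y < x + 1 \<longrightarrow> y \<in> interior I"
      proof (intro ballI impI)
        fix y assume y: "y \<in> I" "x < y \<and> y < x + 1"
        then obtain z where "z \<in> I" "y < z" using False by (meson le_less_linear less_trans)
        thus "y \<in> interior I" using key[of x z y] y assms(2) by auto
      qed
    qed simp
  qed
  obtain e2 where e2: "e2 > 0" "\<forall>y\<in>I. x - e2 < y \<and> y < x \<longrightarrow> y \<in> interior I"
  proof (cases "\<exists>m\<in>I. m < x \<and> (\<forall>z\<in>I. m \<le> z)")
    case True
    then obtain m where m: "m \<in> I" "m < x" "\<forall>z\<in>I. m \<le> z" by blast
    show ?thesis by (rule that[of "x - m"]) (use m key[of m x] assms(2) in auto)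
  next
    case False
    show ?thesis
    proof (rule that[of 1])
      show "\<forall>y\<in>I. x - 1 < y \<and> y < x \<longrightarrow> y \<in> interior I"
      proof (intro ballI impI)
        fix y assume y: "y \<in> I" "x - 1 < y \<and> y < x"
        then obtain z where "z \<in> I" "z < y" using False by (meson le_less_linear less_trans)
        thus "y \<in> interior I" using key[of z x y] y assms(2) by auto
      qed
    qed simp
  qed
  show ?thesis
    by (rule exI[of _ "min e1 e2"]) (use e1 e2 in \<open>auto simp: abs_if split: if_splits\<close>)
qed

lemma indicator_from_01:
  fixes \<alpha> :: "nat \<Rightarrow> real"
  assumes "\<forall>j\<in>{1..n}. \<alpha> j \<in> {0,1}" "(\<Sum>j=1..n. \<alpha> j) = 1"
  shows "\<exists>r\<in>{1..n}. \<forall>j\<in>{1..n}. \<alpha> j = (if j = r then 1 else 0)"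
proof -
  have "\<exists>r\<in>{1..n}. \<alpha> r = 1"
  proof (rule ccontr)
    assume "\<not> ?thesis"
    hence "\<forall>j\<in>{1..n}. \<alpha> j = 0" using assms(1) by auto
    hence "(\<Sum>j=1..n. \<alpha> j) = 0" by simp
    thus False using assms(2) by simp
  qed
  then obtain r where r: "r \<in> {1..n}" "\<alpha> r = 1" by blast
  have "(\<Sum>j=1..n. \<alpha> j) = \<alpha> r + (\<Sum>j\<in>{1..n}-{r}. \<alpha> j)"
    using r(1) by (simp add: sum.remove)
  hence s0: "(\<Sum>j\<in>{1..n}-{r}. \<alpha> j) = 0" using assms(2) r(2) by simp
  have nn: "\<forall>j\<in>{1..n}. \<alpha> j \<ge> 0"
  proof
    fix j assume "j \<in> {1..n}" hence "\<alpha> j \<in> {0,1}" using assms(1) by blast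
    thus "\<alpha> j \<ge> 0" by auto
  qed
  have "\<forall>j\<in>{1..n}-{r}. \<alpha> j = 0"
    using s0 nn by (subst (asm) sum_nonneg_eq_0_iff) auto
  thus ?thesis using r by (intro bexI[of _ r]) auto
qed

lemma local_deriv:
  fixes P :: "real \<Rightarrow> nat \<Rightarrow> real"
  assumes x: "x \<in> interior I" and e: "e > 0"
    and L: "\<forall>y\<in>I. x - e < y \<and> y \<le> x \<longrightarrow> (\<forall>j\<in>{1..n}. P y j = P x j + \<alpha> j * (y - x))"
    and R: "\<forall>y\<in>I. x \<le> y \<and> y < x + e \<longrightarrow> (\<forall>j\<in>{1..n}. P y j = P x j + \<beta> j * (y - x))"
    and d: "\<forall>j\<in>{1..n}. (\<lambda>t. P t j) differentiable (at x)"
  shows "(\<forall>j\<in>{1..n}. \<alpha> j = \<beta> j) \<and> (\<exists>e'>0. \<forall>y. \<bar>y - x\<bar> < e' \<longrightarrow>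
            (\<forall>j\<in>{1..n}. ((\<lambda>t. P t j) has_real_derivative \<alpha> j) (at y)))"
proof -
  obtain r where r: "r > 0" "ball x r \<subseteq> I" using x by (meson mem_interior)
  define e' where "e' = min e r"
  have e'p: "e' > 0" using r e unfolding e'_def by simp
  have inI: "y \<in> I" if "\<bar>y - x\<bar> < e'" for y
    using r(2) that unfolding e'_def by (auto simp: dist_real_def abs_minus_commute)
  have Lj: "P y j = P x j + \<alpha> j * (y - x)" if "x - e' < y" "y \<le> x" "j \<in> {1..n}" for y j
  proof -
    have "y \<in> I" using that by (intro inI) auto
    thus ?thesis using L that unfolding e'_def by auto
  qed
  have Rj: "P y j = P x j + \<beta> j * (y - x)" if "x \<le> y" "y < x + e'" "j \<in> {1..n}" for y j
  proof -
    have "y \<in> I" using that by (intro inI) auto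
    thus ?thesis using R that unfolding e'_def by auto
  qed
  have ab: "\<alpha> j = \<beta> j \<and> ((\<lambda>t. P t j) has_real_derivative \<alpha> j) (at x)" if j: "j \<in> {1..n}" for j
  proof -
    obtain D where D: "((\<lambda>t. P t j) has_real_derivative D) (at x)"
      using d j unfolding real_differentiable_def by blast
    have l: "((\<lambda>t. P t j) has_real_derivative \<alpha> j) (at_left x)"
      by (rule deriv_left_affine[OF e'p], rule Lj) (use j in auto)
    have rr: "((\<lambda>t. P t j) has_real_derivative \<beta> j) (at_right x)"
      by (rule deriv_right_affine[OF e'p], rule Rj) (use j in auto)
    have "D = \<alpha> j"
      by (rule has_field_derivative_unique[OF has_field_derivative_at_within[OF D] l]) simp
    moreover have "D = \<beta> j"
      by (rule has_field_derivative_unique[OF has_field_derivative_at_within[OF D] rr]) simp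
    ultimately show ?thesis using D by simp
  qed
  show ?thesis
  proof (intro conjI ballI exI[of _ e'] allI impI e'p)
    fix j assume "j \<in> {1..n}" thus "\<alpha> j = \<beta> j" using ab by blast
  next
    fix y j assume y: "\<bar>y - x\<bar> < e'" and j: "j \<in> {1..n}"
    consider "y < x" | "y = x" | "y > x" by linarith
    thus "((\<lambda>t. P t j) has_real_derivative \<alpha> j) (at y)"
    proof cases
      case 1
      show ?thesis
      proof (rule deriv_open_affine[of "{x - e'<..<x}" _ _ "P x j - \<alpha> j * x"])
        fix z assume "z \<in> {x - e'<..<x}"
        hence "P z j = P x j + \<alpha> j * (z - x)" by (intro Lj j) auto
        thus "P z j = P x j - \<alpha> j * x + \<alpha> j * z" by (simp add: algebra_simps)
      qed (use y 1 in auto)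
    next
      case 2
      have "\<alpha> j = \<beta> j \<and> ((\<lambda>t. P t j) has_real_derivative \<alpha> j) (at x)" using ab j by blast
      then show ?thesis unfolding 2 by blast
    next
      case 3
      show ?thesis
      proof (rule deriv_open_affine[of "{x<..<x + e'}" _ _ "P x j - \<alpha> j * x"])
        fix z assume "z \<in> {x<..<x + e'}"
        hence "P z j = P x j + \<beta> j * (z - x)" by (intro Rj j) auto
        thus "P z j = P x j - \<alpha> j * x + \<alpha> j * z" using ab j by (simp add: algebra_simps)
      qed (use y 3 in auto)
    qed
  qed
qed

lemma local_ok_diff:
  fixes P :: "real \<Rightarrow> nat \<Rightarrow> real"
  assumes e: "e > 0"
    and L: "\<forall>y\<in>I. q - e < y \<and> y \<le> q \<longrightarrow> (\<forall>j\<in>{1..n}. P y j = P q j + \<alpha> j * (y - q))"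
    and R: "\<forall>y\<in>I. q \<le> y \<and> y < q + e \<longrightarrow> (\<forall>j\<in>{1..n}. P y j = P q j + \<beta> j * (y - q))"
    and x: "x \<in> interior I" "x \<noteq> q" "\<bar>x - q\<bar> < e"
  shows "\<forall>j\<in>{1..n}. (\<lambda>t. P t j) differentiable (at x)"
proof
  fix j assume j: "j \<in> {1..n}"
  have sI: "interior I \<subseteq> I" by (rule interior_subset)
  consider "x < q" | "x > q" using x by linarith
  thus "(\<lambda>t. P t j) differentiable (at x)"
  proof cases
    case 1
    have "((\<lambda>t. P t j) has_real_derivative \<alpha> j) (at x)"
      by (rule deriv_open_affine[of "interior I \<inter> {q - e<..<q}" _ _ "P q j - \<alpha> j * q"])
         (use x 1 L j sI in \<open>auto simp: algebra_simps\<close>)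
    thus ?thesis unfolding real_differentiable_def by blast
  next
    case 2
    have "((\<lambda>t. P t j) has_real_derivative \<beta> j) (at x)"
      by (rule deriv_open_affine[of "interior I \<inter> {q<..<q + e}" _ _ "P q j - \<beta> j * q"])
         (use x 2 R j sI in \<open>auto simp: algebra_simps\<close>)
    thus ?thesis unfolding real_differentiable_def by blast
  qed
qed

lemma point_deriv:
  fixes P :: "real \<Rightarrow> nat \<Rightarrow> real"
  assumes y: "y \<in> interior I" and d: "\<forall>j\<in>{1..n}. (\<lambda>t. P t j) differentiable (at y)"
    and lok: "local_ok n I P y" and S: "sys_cond1 n I P"
  shows "\<exists>r\<in>{1..n}. \<exists>e'>0. \<forall>z. \<bar>z - y\<bar> < e' \<longrightarrow>
            (\<forall>j\<in>{1..n}. ((\<lambda>t. P t j) has_real_derivative (if j = r then 1 else 0)) (at z))"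
proof -
  obtain e \<alpha> \<beta> where e: "e > 0" and ab: "\<forall>j\<in>{1..n}. \<alpha> j \<in> {0,1} \<and> \<beta> j \<in> {0,1}"
      and L: "\<forall>z\<in>I. y - e < z \<and> z \<le> y \<longrightarrow> (\<forall>j\<in>{1..n}. P z j = P y j + \<alpha> j * (z - y))"
      and R: "\<forall>z\<in>I. y \<le> z \<and> z < y + e \<longrightarrow> (\<forall>j\<in>{1..n}. P z j = P y j + \<beta> j * (z - y))"
      and S3l: "y \<in> interior I \<longrightarrow> (\<forall>a\<in>{1..n}. \<forall>b\<in>{1..n}. \<alpha> a = 1 \<and> \<beta> b = 1 \<and> a < b \<longrightarrow>
        (\<forall>j\<in>{a..b}. P y j = P y a))"
      by (rule local_okE[OF lok])
  obtain e' where e': "e' > 0" and der: "\<forall>z. \<bar>z - y\<bar> < e' \<longrightarrow>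
            (\<forall>j\<in>{1..n}. ((\<lambda>t. P t j) has_real_derivative \<alpha> j) (at z))"
    using local_deriv[OF y e L R d] by blast
  have dsum: "((\<lambda>t. \<Sum>j=1..n. P t j) has_real_derivative (\<Sum>j=1..n. \<alpha> j)) (at y)"
    using der e' by (intro DERIV_sum) auto
  have "((\<lambda>t. \<Sum>j=1..n. P t j) has_real_derivative 1) (at y)"
    by (rule deriv_open_affine[of "interior I" _ _ 0]) (use y S interior_subset in \<open>auto simp: sys_cond1_def\<close>)
  hence "(\<Sum>j=1..n. \<alpha> j) = 1" using dsum DERIV_unique by blast
  then obtain r where r: "r \<in> {1..n}" "\<forall>j\<in>{1..n}. \<alpha> j = (if j = r then 1 else 0)"
    using indicator_from_01[of n \<alpha>] ab by blast
  show ?thesis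
    by (rule bexI[OF _ r(1)], rule exI[of _ e']) (use e' der r(2) in auto)
qed

lemma n_system_from_local:
  fixes P :: "real \<Rightarrow> nat \<Rightarrow> real"
  assumes I: "is_interval I" "interior I \<noteq> {}" and S: "sys_cond1 n I P"
    and lok: "\<forall>x\<in>I. local_ok n I P x"
  shows "n_system n I P"
proof -
  let ?D = "nondiff_set n I P"
  have Dchar: "x \<in> interior I \<and> (\<forall>j\<in>{1..n}. (\<lambda>t. P t j) differentiable (at x))" if "x \<in> I" "x \<notin> ?D" for x
    using that unfolding nondiff_set_def by auto
  have cont: "\<forall>j\<in>{1..n}. continuous_on I (\<lambda>t. P t j)"
  proof (intro ballI)
    fix j assume j: "j \<in> {1..n}"
    show "continuous_on I (\<lambda>t. P t j)"
      unfolding continuous_on_eq_continuous_within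
    proof
      fix x assume x: "x \<in> I"
      obtain e \<alpha> \<beta> where e: "e > 0" and ab: "\<forall>j\<in>{1..n}. \<alpha> j \<in> {0,1} \<and> \<beta> j \<in> {0,1}"
      and L: "\<forall>z\<in>I. x - e < z \<and> z \<le> x \<longrightarrow> (\<forall>j\<in>{1..n}. P z j = P x j + \<alpha> j * (z - x))"
      and R: "\<forall>z\<in>I. x \<le> z \<and> z < x + e \<longrightarrow> (\<forall>j\<in>{1..n}. P z j = P x j + \<beta> j * (z - x))"
      and S3l: "x \<in> interior I \<longrightarrow> (\<forall>a\<in>{1..n}. \<forall>b\<in>{1..n}. \<alpha> a = 1 \<and> \<beta> b = 1 \<and> a < b \<longrightarrow>
        (\<forall>j\<in>{a..b}. P x j = P x a))"
      by (rule local_okE[OF bspec[OF lok x]])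
      have "\<alpha> j \<in> {0,1} \<and> \<beta> j \<in> {0,1}" using ab j by blast
      hence a1: "\<bar>\<alpha> j\<bar> \<le> 1" "\<bar>\<beta> j\<bar> \<le> 1" by auto
      show "continuous (at x within I) (\<lambda>t. P t j)"
        unfolding continuous_within_eps_delta
      proof (intro allI impI)
        fix \<epsilon> :: real assume \<epsilon>: "\<epsilon> > 0"
        show "\<exists>\<delta>>0. \<forall>x'\<in>I. dist x' x < \<delta> \<longrightarrow> dist (P x' j) (P x j) < \<epsilon>"
        proof (intro exI[of _ "min e \<epsilon>"] conjI ballI impI)
          show "min e \<epsilon> > 0" using e \<epsilon> by simp
          fix x' assume x': "x' \<in> I" "dist x' x < min e \<epsilon>"
          have dx: "\<bar>x' - x\<bar> < e" "\<bar>x' - x\<bar> < \<epsilon>" using x' by (auto simp: dist_real_def)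
          show "dist (P x' j) (P x j) < \<epsilon>"
          proof (cases "x' \<le> x")
            case True
            hence "P x' j - P x j = \<alpha> j * (x' - x)" using L x' dx j by auto
            moreover have "\<bar>\<alpha> j * (x' - x)\<bar> \<le> \<bar>x' - x\<bar>"
              using a1 by (simp add: abs_mult mult_left_le_one_le)
            ultimately show ?thesis using dx by (simp add: dist_real_def)
          next
            case False
            hence "P x' j - P x j = \<beta> j * (x' - x)" using R x' dx j by auto
            moreover have "\<bar>\<beta> j * (x' - x)\<bar> \<le> \<bar>x' - x\<bar>"
              using a1 by (simp add: abs_mult mult_left_le_one_le)
            ultimately show ?thesis using dx by (simp add: dist_real_def)
          qed
        qed
      qed
    qed
  qed
  have discr: "\<forall>q\<in>I. \<exists>e>0. \<forall>x\<in>?D. \<bar>x - q\<bar> < e \<longrightarrow> x = q"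
  proof
    fix q assume q: "q \<in> I"
    obtain e \<alpha> \<beta> where e: "e > 0" and ab: "\<forall>j\<in>{1..n}. \<alpha> j \<in> {0,1} \<and> \<beta> j \<in> {0,1}"
      and L: "\<forall>z\<in>I. q - e < z \<and> z \<le> q \<longrightarrow> (\<forall>j\<in>{1..n}. P z j = P q j + \<alpha> j * (z - q))"
      and R: "\<forall>z\<in>I. q \<le> z \<and> z < q + e \<longrightarrow> (\<forall>j\<in>{1..n}. P z j = P q j + \<beta> j * (z - q))"
      and S3l: "q \<in> interior I \<longrightarrow> (\<forall>a\<in>{1..n}. \<forall>b\<in>{1..n}. \<alpha> a = 1 \<and> \<beta> b = 1 \<and> a < b \<longrightarrow>
        (\<forall>j\<in>{a..b}. P q j = P q a))"
      by (rule local_okE[OF bspec[OF lok q]])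
    obtain e2 where e2: "e2 > 0" "\<forall>y\<in>I. y \<noteq> q \<and> \<bar>y - q\<bar> < e2 \<longrightarrow> y \<in> interior I"
      using interval_near_interior[OF I(1) q] by blast
    show "\<exists>e>0. \<forall>x\<in>?D. \<bar>x - q\<bar> < e \<longrightarrow> x = q"
    proof (intro exI[of _ "min e e2"] conjI ballI impI)
      show "min e e2 > 0" using e e2 by simp
      fix x assume x: "x \<in> ?D" "\<bar>x - q\<bar> < min e e2"
      show "x = q"
      proof (rule ccontr)
        assume ne: "x \<noteq> q"
        have xI: "x \<in> I" using x unfolding nondiff_set_def by auto
        have xi: "x \<in> interior I" using e2 xI ne x by auto
        have "\<forall>j\<in>{1..n}. (\<lambda>t. P t j) differentiable (at x)"
          by (rule local_ok_diff[OF e L R xi ne]) (use x in auto)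
        thus False using x xi unfolding nondiff_set_def by auto
      qed
    qed
  qed
  have lconst: "\<forall>q\<in>I - ?D. \<exists>e>0. \<forall>x\<in>I - ?D. \<bar>x - q\<bar> < e \<longrightarrow>
        (\<forall>j\<in>{1..n}. deriv (\<lambda>t. P t j) x = deriv (\<lambda>t. P t j) q)"
  proof
    fix q assume q: "q \<in> I - ?D"
    have qi: "q \<in> interior I" and qd: "\<forall>j\<in>{1..n}. (\<lambda>t. P t j) differentiable (at q)"
      using Dchar q by auto
    obtain r e' where e': "e' > 0" and der: "\<forall>z. \<bar>z - q\<bar> < e' \<longrightarrow>
            (\<forall>j\<in>{1..n}. ((\<lambda>t. P t j) has_real_derivative (if j = r then 1 else 0)) (at z))"
      using point_deriv[OF qi qd _ S] lok q by blast
    show "\<exists>e>0. \<forall>x\<in>I - ?D. \<bar>x - q\<bar> < e \<longrightarrow>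
        (\<forall>j\<in>{1..n}. deriv (\<lambda>t. P t j) x = deriv (\<lambda>t. P t j) q)"
    proof (intro exI[of _ e'] conjI ballI impI e')
      fix x j assume x: "x \<in> I - ?D" "\<bar>x - q\<bar> < e'" and j: "j \<in> {1..n}"
      have "deriv (\<lambda>t. P t j) x = (if j = r then 1 else 0)"
        using der x j by (intro DERIV_imp_deriv) auto
      moreover have "deriv (\<lambda>t. P t j) q = (if j = r then 1 else 0)"
        using der e' j by (intro DERIV_imp_deriv) auto
      ultimately show "deriv (\<lambda>t. P t j) x = deriv (\<lambda>t. P t j) q" by simp
    qed
  qed
  have S2: "\<forall>H. diff_subinterval n I P H \<longrightarrow>
        (\<exists>r\<in>{1..n}. \<forall>x\<in>H. \<forall>j\<in>{1..n}.
            ((\<lambda>t. P t j) has_real_derivative (if j = r then 1 else 0)) (at x))"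
  proof (intro allI impI)
    fix H assume H: "diff_subinterval n I P H"
    have Hi: "H \<subseteq> interior I" using H unfolding diff_subinterval_def by (intro interior_maximal) auto
    have Hd: "\<forall>x\<in>H. \<forall>j\<in>{1..n}. (\<lambda>t. P t j) differentiable (at x)"
      using H unfolding diff_subinterval_def by auto
    define Rf where "Rf y = (SOME r. r \<in> {1..n} \<and> (\<exists>e'>0. \<forall>z. \<bar>z - y\<bar> < e' \<longrightarrow>
            (\<forall>j\<in>{1..n}. ((\<lambda>t. P t j) has_real_derivative (if j = r then 1 else 0)) (at z))))" for y
    have Rf: "Rf y \<in> {1..n} \<and> (\<exists>e'>0. \<forall>z. \<bar>z - y\<bar> < e' \<longrightarrow>
            (\<forall>j\<in>{1..n}. ((\<lambda>t. P t j) has_real_derivative (if j = Rf y then 1 else 0)) (at z)))"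
      if y: "y \<in> H" for y
    proof -
      have "\<exists>r. r \<in> {1..n} \<and> (\<exists>e'>0. \<forall>z. \<bar>z - y\<bar> < e' \<longrightarrow>
            (\<forall>j\<in>{1..n}. ((\<lambda>t. P t j) has_real_derivative (if j = r then 1 else 0)) (at z)))"
        using point_deriv[of y I n P] Hi Hd y lok S interior_subset by blast
      thus ?thesis unfolding Rf_def by (rule someI_ex)
    qed
    have Rat: "\<forall>j\<in>{1..n}. ((\<lambda>t. P t j) has_real_derivative (if j = Rf y then 1 else 0)) (at y)"
      if "y \<in> H" for y
      using Rf[OF that] by force
    have ev: "\<forall>a\<in>H. eventually (\<lambda>b. Rf a = Rf b) (at a within H)"
    proof
      fix a assume a: "a \<in> H"
      obtain e' where e': "e' > 0" "\<forall>z. \<bar>z - a\<bar> < e' \<longrightarrow>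
            (\<forall>j\<in>{1..n}. ((\<lambda>t. P t j) has_real_derivative (if j = Rf a then 1 else 0)) (at z))"
        using Rf[OF a] by blast
      show "eventually (\<lambda>b. Rf a = Rf b) (at a within H)"
        unfolding eventually_at
      proof (intro exI[of _ e'] conjI ballI impI e'(1))
        fix b assume b: "b \<in> H" "b \<noteq> a \<and> dist b a < e'"
        have rb: "Rf b \<in> {1..n}" using Rf[OF b(1)] by blast
        have d1: "((\<lambda>t. P t (Rf b)) has_real_derivative (if Rf b = Rf b then 1 else 0)) (at b)"
          using Rat[OF b(1)] rb by blast
        have d2: "((\<lambda>t. P t (Rf b)) has_real_derivative (if Rf b = Rf a then 1 else 0)) (at b)"
          using e'(2) b rb by (auto simp: dist_real_def)
        have "(if Rf b = Rf b then 1 else 0) = (if Rf b = Rf a then 1 else (0::real))" using DERIV_unique[OF d1 d2] .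
        thus "Rf a = Rf b" by (auto split: if_splits)
      qed
    qed
    have conn: "connected H" using H unfolding diff_subinterval_def by (simp add: is_interval_connected)
    obtain y0 where y0: "y0 \<in> H" using H unfolding diff_subinterval_def by auto
    show "\<exists>r\<in>{1..n}. \<forall>x\<in>H. \<forall>j\<in>{1..n}.
            ((\<lambda>t. P t j) has_real_derivative (if j = r then 1 else 0)) (at x)"
    proof (intro bexI[of _ "Rf y0"] ballI)
      show "Rf y0 \<in> {1..n}" using Rf[OF y0] by blast
      fix x j assume x: "x \<in> H" and j: "j \<in> {1..n}"
      have "Rf y0 = Rf x" by (rule connected_local_const[OF conn y0 x ev])
      thus "((\<lambda>t. P t j) has_real_derivative (if j = Rf y0 then 1 else 0)) (at x)"
        using Rat[OF x] j by simp
    qed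
  qed
  have S3: "\<forall>q\<in>interior I \<inter> ?D. \<forall>r\<in>{1..n}. \<forall>s\<in>{1..n}.
        ((\<lambda>t. P t r) has_real_derivative 1) (at_left q) \<and>
        ((\<lambda>t. P t s) has_real_derivative 1) (at_right q) \<and> r < s \<longrightarrow>
        (\<forall>j\<in>{r..s}. P q j = P q r)"
  proof (intro ballI impI)
    fix q r s assume q: "q \<in> interior I \<inter> ?D" and r: "r \<in> {1..n}" and s: "s \<in> {1..n}"
      and h: "((\<lambda>t. P t r) has_real_derivative 1) (at_left q) \<and>
        ((\<lambda>t. P t s) has_real_derivative 1) (at_right q) \<and> r < s"
    have qI: "q \<in> I" using q interior_subset by blast
    obtain e \<alpha> \<beta> where e: "e > 0" and ab: "\<forall>j\<in>{1..n}. \<alpha> j \<in> {0,1} \<and> \<beta> j \<in> {0,1}"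
      and L: "\<forall>z\<in>I. q - e < z \<and> z \<le> q \<longrightarrow> (\<forall>j\<in>{1..n}. P z j = P q j + \<alpha> j * (z - q))"
      and R: "\<forall>z\<in>I. q \<le> z \<and> z < q + e \<longrightarrow> (\<forall>j\<in>{1..n}. P z j = P q j + \<beta> j * (z - q))"
      and S3l: "q \<in> interior I \<longrightarrow> (\<forall>a\<in>{1..n}. \<forall>b\<in>{1..n}. \<alpha> a = 1 \<and> \<beta> b = 1 \<and> a < b \<longrightarrow>
        (\<forall>j\<in>{a..b}. P q j = P q a))"
      by (rule local_okE[OF bspec[OF lok qI]])
    obtain rr where rr: "rr > 0" "ball q rr \<subseteq> I" using q by (meson IntD1 mem_interior)
    define e' where "e' = min e rr"
    have e'p: "e' > 0" using e rr unfolding e'_def by simp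
    have inI: "z \<in> I" if "\<bar>z - q\<bar> < e'" for z
      using rr(2) that unfolding e'_def by (auto simp: dist_real_def abs_minus_commute)
    have l: "((\<lambda>t. P t r) has_real_derivative \<alpha> r) (at_left q)"
    proof (rule deriv_left_affine[OF e'p])
      fix y assume y: "q - e' < y" "y < q"
      have "y \<in> I" using y by (intro inI) auto
      thus "P y r = P q r + \<alpha> r * (y - q)" using L y r unfolding e'_def by auto
    qed
    have rt: "((\<lambda>t. P t s) has_real_derivative \<beta> s) (at_right q)"
    proof (rule deriv_right_affine[OF e'p])
      fix y assume y: "q < y" "y < q + e'"
      have "y \<in> I" using y by (intro inI) auto
      thus "P y s = P q s + \<beta> s * (y - q)" using R y s unfolding e'_def by auto
    qed
    have ar: "\<alpha> r = 1" using has_field_derivative_unique[OF l conjunct1[OF h]] by simp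
    have bs: "\<beta> s = 1" using has_field_derivative_unique[OF rt conjunct1[OF conjunct2[OF h]]] by simp
    have qi: "q \<in> interior I" using q by blast
    have rs: "r < s" using h by blast
    have all: "\<forall>j\<in>{r..s}. P q j = P q r" using S3l qi r s ar bs rs by blast
    fix j assume "j \<in> {r..s}" thus "P q j = P q r" using all by blast
  qed
  show ?thesis
    unfolding n_system_def cont_piecewise_linear_def using cont discr lconst S S2 S3 by blast
qed



definition phi :: "real \<Rightarrow> real \<Rightarrow> real" where
  "phi k w = of_int \<lfloor>w\<rfloor> + min 1 (k * (w - of_int \<lfloor>w\<rfloor>))"

lemma phi_right:
  assumes k: "k \<ge> 1"
  shows "\<exists>\<eta>>0. \<forall>v. w \<le> v \<and> v \<le> w + \<eta> \<longrightarrow>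
     phi k v = phi k w + (if w - of_int \<lfloor>w\<rfloor> < 1/k then k else 0) * (v - w)"
proof -
  define N where "N = \<lfloor>w\<rfloor>"
  define f where "f = w - of_int N"
  have f0: "0 \<le> f" "f < 1" unfolding f_def N_def by linarith+
  have kp: "k > 0" using k by simp
  show ?thesis
  proof (cases "f < 1/k")
    case True
    have ik: "1/k \<le> 1" using k by simp
    define a where "a = 1/k"
    have aa: "w - N < a" "a \<le> 1" using True ik unfolding a_def f_def by auto
    have wf: "phi k w = N + k*f" unfolding phi_def N_def[symmetric] f_def[symmetric]
      using True kp by (simp add: field_simps)
    show ?thesis
    proof (intro exI[of _ "(1/k - f)/2"] conjI allI impI)
      show "(1/k - f)/2 > 0" using True by simp
      fix v assume v: "w \<le> v \<and> v \<le> w + (1/k - f)/2"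
      have fl: "\<lfloor>v\<rfloor> = N" using conjunct1[OF v] conjunct2[OF v] f0 aa unfolding f_def a_def[symmetric] by (intro floor_unique; argo)
      have "k * (v - N) < 1"
      proof -
        have "v - N < 1/k" using conjunct2[OF v] True unfolding f_def by argo
        hence "k * (v - N) < k * (1/k)" using kp by (intro mult_strict_left_mono) auto
        thus ?thesis using kp by simp
      qed
      hence "phi k v = N + k * (v - N)" unfolding phi_def fl by simp
      thus "phi k v = phi k w + (if w - of_int \<lfloor>w\<rfloor> < 1/k then k else 0) * (v - w)"
        using True wf unfolding N_def[symmetric] f_def[symmetric] by (simp add: f_def algebra_simps)
    qed
  next
    case False
    have kf: "k * f \<ge> 1" using False kp by (simp add: field_simps)
    have wf: "phi k w = N + 1" unfolding phi_def N_def[symmetric] f_def[symmetric] using kf by simp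
    show ?thesis
    proof (intro exI[of _ "(1 - f)/2"] conjI allI impI)
      show "(1 - f)/2 > 0" using f0 by simp
      fix v assume v: "w \<le> v \<and> v \<le> w + (1 - f)/2"
      have fl: "\<lfloor>v\<rfloor> = N" using conjunct1[OF v] conjunct2[OF v] f0 unfolding f_def by (intro floor_unique; argo)
      have "k * (v - N) \<ge> k * f" using v kp unfolding f_def by (intro mult_left_mono) auto
      hence "phi k v = N + 1" unfolding phi_def fl using kf by simp
      thus "phi k v = phi k w + (if w - of_int \<lfloor>w\<rfloor> < 1/k then k else 0) * (v - w)"
        using False wf unfolding N_def[symmetric] f_def[symmetric] by simp
    qed
  qed
qed

lemma phi_left:
  assumes k: "k \<ge> 2"
  shows "\<exists>\<eta>>0. \<forall>v. w - \<eta> \<le> v \<and> v \<le> w \<longrightarrow>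
     phi k v = phi k w + (if 0 < w - of_int \<lfloor>w\<rfloor> \<and> w - of_int \<lfloor>w\<rfloor> \<le> 1/k then k else 0) * (v - w)"
proof -
  define N where "N = \<lfloor>w\<rfloor>"
  define f where "f = w - of_int N"
  have f0: "0 \<le> f" "f < 1" unfolding f_def N_def by linarith+
  have kp: "k > 0" using k by simp
  have ik: "1/k \<le> 1/2" using k by (simp add: divide_simps)
  show ?thesis
  proof (cases "f = 0")
    case True
    have wf: "phi k w = N" unfolding phi_def N_def[symmetric] f_def[symmetric] using True by simp
    show ?thesis
    proof (intro exI[of _ "(1 - 1/k)/2"] conjI allI impI)
      show "(1 - 1/k)/2 > 0" using ik by simp
      fix v assume v: "w - (1 - 1/k)/2 \<le> v \<and> v \<le> w"
      show "phi k v = phi k w + (if 0 < w - of_int \<lfloor>w\<rfloor> \<and> w - of_int \<lfloor>w\<rfloor> \<le> 1/k then k else 0) * (v - w)"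
      proof (cases "v = w")
        case True thus ?thesis by simp
      next
        case False
        have wN: "w = N" using \<open>f = 0\<close> unfolding f_def by simp
        define a where "a = 1/k"
        have aa: "a \<le> 1/2" "a > 0" using ik kp unfolding a_def by auto
        have fl: "\<lfloor>v\<rfloor> = N - 1" using conjunct1[OF v] conjunct2[OF v] False aa wN unfolding a_def[symmetric] by (intro floor_unique; simp; argo)
        have a: "v - (N - 1) \<ge> 1/k" using conjunct1[OF v] aa wN unfolding a_def[symmetric] of_int_diff of_int_1 by argo
        have "k * (v - (N - 1)) \<ge> k * (1/k)" using a kp by (intro mult_left_mono) auto
        hence "k * (v - (N - 1)) \<ge> 1" using kp by simp
        hence "phi k v = N" unfolding phi_def fl by simp
        thus ?thesis using wf \<open>f = 0\<close> unfolding N_def[symmetric] f_def[symmetric] by simp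
      qed
    qed
  next
    case False
    hence fpos: "f > 0" using f0 by simp
    show ?thesis
    proof (cases "f \<le> 1/k")
      case True
      have kf1: "k * f \<le> 1" using True kp by (simp add: field_simps)
      have wf: "phi k w = N + k*f" unfolding phi_def N_def[symmetric] f_def[symmetric] using kf1 by simp
      show ?thesis
      proof (intro exI[of _ "f/2"] conjI allI impI)
        show "f/2 > 0" using fpos by simp
        fix v assume v: "w - f/2 \<le> v \<and> v \<le> w"
        have fl: "\<lfloor>v\<rfloor> = N" using conjunct1[OF v] conjunct2[OF v] f0 fpos unfolding f_def by (intro floor_unique; argo)
        have "k * (v - N) \<le> k * f" using v kp unfolding f_def by (intro mult_left_mono) auto
        hence "phi k v = N + k*(v - N)" unfolding phi_def fl using kf1 by simp
        thus "phi k v = phi k w + (if 0 < w - of_int \<lfloor>w\<rfloor> \<and> w - of_int \<lfloor>w\<rfloor> \<le> 1/k then k else 0) * (v - w)"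
          using True fpos wf unfolding N_def[symmetric] f_def[symmetric] by (simp add: f_def algebra_simps)
      qed
    next
      case False
      have kf: "k * f > 1" using False kp by (simp add: field_simps)
      have wf: "phi k w = N + 1" unfolding phi_def N_def[symmetric] f_def[symmetric] using kf by simp
      show ?thesis
      proof (intro exI[of _ "(f - 1/k)/2"] conjI allI impI)
        show "(f - 1/k)/2 > 0" using False by simp
        fix v assume v: "w - (f - 1/k)/2 \<le> v \<and> v \<le> w"
        have vN: "v - N \<ge> 1/k" using conjunct1[OF v] False unfolding f_def by argo
        have ikp: "1/k > 0" using kp by simp
        have fl: "\<lfloor>v\<rfloor> = N" using conjunct2[OF v] f0 vN ikp unfolding f_def
          by (intro floor_unique; argo)
        have "k * (v - N) \<ge> k * (1/k)" using vN kp by (intro mult_left_mono) auto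
        hence "phi k v = N + 1" unfolding phi_def fl using kp by simp
        thus "phi k v = phi k w + (if 0 < w - of_int \<lfloor>w\<rfloor> \<and> w - of_int \<lfloor>w\<rfloor> \<le> 1/k then k else 0) * (v - w)"
          using False wf unfolding N_def[symmetric] f_def[symmetric] by simp
      qed
    qed
  qed
qed

lemma phi_mono:
  assumes k: "k \<ge> 1" and vw: "v \<le> w"
  shows "phi k v \<le> phi k w"
proof (cases "\<lfloor>v\<rfloor> = \<lfloor>w\<rfloor>")
  case True
  have "k * (v - \<lfloor>v\<rfloor>) \<le> k * (w - \<lfloor>w\<rfloor>)" using k vw True by (intro mult_left_mono) auto
  thus ?thesis unfolding phi_def True by simp
next
  case False
  hence "\<lfloor>v\<rfloor> + 1 \<le> \<lfloor>w\<rfloor>" using vw floor_mono[OF vw] by linarith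
  moreover have "0 \<le> k * (w - \<lfloor>w\<rfloor>)" using k by simp
  ultimately show ?thesis unfolding phi_def by linarith
qed

lemma phi_bounds:
  assumes k: "k \<ge> 1"
  shows "0 \<le> phi k w - w" "phi k w - w \<le> 1"
proof -
  have f: "0 \<le> w - \<lfloor>w\<rfloor>" "w - \<lfloor>w\<rfloor> < 1" by linarith+
  have "k * (w - \<lfloor>w\<rfloor>) \<ge> 1 * (w - \<lfloor>w\<rfloor>)" using k f by (intro mult_right_mono) auto
  moreover have "min 1 (k * (w - \<lfloor>w\<rfloor>)) \<le> 1" by simp
  moreover have "min 1 (k * (w - \<lfloor>w\<rfloor>)) \<ge> w - \<lfloor>w\<rfloor>" using f calculation(1) by simp
  ultimately show "0 \<le> phi k w - w" "phi k w - w \<le> 1" unfolding phi_def using f by linarith+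
qed

lemma phi_int: "phi k (of_int N) = of_int N"
  unfolding phi_def by simp

lemma phi_int_minus:
  assumes "k \<ge> 1" "1 \<le> p" "p \<le> k - 1"
  shows "phi k (of_int N - p/k) = of_int N"
proof -
  have kp: "k > 0" using assms by simp
  have a: "0 < p/k" "p/k < 1" using assms by (auto simp: field_simps)
  have fl: "\<lfloor>of_int N - p/k\<rfloor> = N - 1" using a by (intro floor_unique) auto
  have "k * (of_int N - p/k - of_int (N - 1)) = k - p" using kp by (simp add: field_simps)
  thus ?thesis unfolding phi_def fl using assms by simp
qed

lemma phi_sum_term:
  fixes K :: nat and \<tau> :: real
  assumes K: "K \<ge> 1" and p: "p < K"
  defines "N \<equiv> \<lfloor>\<tau>\<rfloor>"
  defines "i \<equiv> nat \<lfloor>real K * (\<tau> - N)\<rfloor>"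
  defines "g \<equiv> real K * (\<tau> - N) - i"
  shows "phi K (\<tau> - p/K) = N + (if p < i then 1 else if p = i then g else 0)"
proof -
  have Kp: "real K > 0" using K by simp
  have f: "0 \<le> \<tau> - N" "\<tau> - N < 1" unfolding N_def by linarith+
  have "real K * (\<tau> - N) < real K" using f Kp by simp
  hence "\<lfloor>real K * (\<tau> - N)\<rfloor> < int K" by (simp add: floor_less_iff)
  hence iK: "i < K" unfolding i_def using K by (cases "\<lfloor>real K * (\<tau> - N)\<rfloor> < 0") (auto simp: nat_less_iff)
  have g: "0 \<le> g" "g < 1" unfolding g_def i_def using f Kp by (auto simp: of_nat_nat; linarith)+
  have tau: "\<tau> - p/K = N + (real i - p + g)/K" unfolding g_def using Kp by (simp add: field_simps)
  show ?thesis
  proof (cases "p < i")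
    case True
    have a: "1 \<le> real i - p + g" "real i - p + g < K" using True g iK by linarith+
    have fl: "\<lfloor>\<tau> - p/K\<rfloor> = N" unfolding tau using a Kp by (intro floor_unique) (auto simp: field_simps)
    have "K * (\<tau> - p/K - N) = real i - p + g" unfolding tau using Kp by (simp add: field_simps)
    thus ?thesis unfolding phi_def fl using True a by simp
  next
    case False
    show ?thesis
    proof (cases "p = i")
      case True
      have fl: "\<lfloor>\<tau> - p/K\<rfloor> = N" unfolding tau using True g Kp by (intro floor_unique) (auto simp: field_simps)
      have "K * (\<tau> - p/K - N) = K * ((real i - p + g)/K)" using tau by simp
      hence "K * (\<tau> - p/K - N) = g" using True Kp by simp
      thus ?thesis unfolding phi_def fl using True g by simp
    next
      case False2: False
      have a: "real i - p + g < 0" "real i - p + g > - K" using False False2 g p by linarith+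
      have fl: "\<lfloor>\<tau> - p/K\<rfloor> = N - 1" unfolding tau using a Kp by (intro floor_unique) (auto simp: field_simps)
      have "K * (\<tau> - p/K - (N - 1)) = K + (real i - p + g)" unfolding tau using Kp by (simp add: field_simps)
      moreover have "K + (real i - p + g) \<ge> 1" using p g by linarith
      ultimately show ?thesis unfolding phi_def fl using False False2 by simp
    qed
  qed
qed

lemma phi_sum:
  fixes K :: nat and \<tau> :: real
  assumes K: "K \<ge> 1"
  shows "(\<Sum>p<K. phi K (\<tau> - p/K)) = K * \<tau>"
proof -
  define N where "N = \<lfloor>\<tau>\<rfloor>"
  define i where "i = nat \<lfloor>real K * (\<tau> - N)\<rfloor>"
  define g where "g = real K * (\<tau> - N) - i"
  have Kp: "real K > 0" using K by simp
  have f: "0 \<le> \<tau> - N" "\<tau> - N < 1" unfolding N_def by linarith+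
  have "real K * (\<tau> - N) < real K" using f Kp by simp
  hence "\<lfloor>real K * (\<tau> - N)\<rfloor> < int K" by (simp add: floor_less_iff)
  hence iK: "i < K" unfolding i_def using K by (cases "\<lfloor>real K * (\<tau> - N)\<rfloor> < 0") (auto simp: nat_less_iff)
  have "(\<Sum>p<K. phi K (\<tau> - p/K)) = (\<Sum>p<K. N + ((if p < i then 1 else 0) + (if p = i then g else 0)))"
    using phi_sum_term[OF K] unfolding N_def i_def g_def by (intro sum.cong) auto
  also have "\<dots> = K * N + (real (card {p. p < K \<and> p < i}) + g)"
    using iK by (simp add: sum.distrib sum.If_cases Int_def)
  also have "{p. p < K \<and> p < i} = {..<i}" using iK by auto
  finally show ?thesis by (simp add: g_def algebra_simps)
qed



definition Kf :: "nat \<Rightarrow> nat \<Rightarrow> real" where "Kf rl rh = real (rh - rl + 1)"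

definition ww :: "real \<Rightarrow> real \<Rightarrow> nat \<Rightarrow> nat \<Rightarrow> real \<Rightarrow> nat \<Rightarrow> real" where
  "ww c \<delta> rl rh y j = (y - c) / (Kf rl rh * \<delta>) - real (rh - j) / Kf rl rh"

definition corr :: "real \<Rightarrow> real \<Rightarrow> nat \<Rightarrow> nat \<Rightarrow> real \<Rightarrow> nat \<Rightarrow> real" where
  "corr c \<delta> rl rh y j = (if rl \<le> j \<and> j \<le> rh \<and> rl < rh then
      \<delta> * (phi (Kf rl rh) (ww c \<delta> rl rh y j) - (y - c) / (Kf rl rh * \<delta>)) else 0)"

definition gco :: "nat \<Rightarrow> nat \<Rightarrow> nat \<Rightarrow> real" where
  "gco rl rh j = (if rl \<le> j \<and> j \<le> rh then 1 / Kf rl rh else 0)"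

definition Qf :: "(nat \<Rightarrow> real) \<Rightarrow> real \<Rightarrow> real \<Rightarrow> nat \<Rightarrow> nat \<Rightarrow> real \<Rightarrow> nat \<Rightarrow> real" where
  "Qf A c \<delta> rl rh y j = A j + gco rl rh j * y + corr c \<delta> rl rh y j"

definition frc :: "real \<Rightarrow> real" where "frc v = v - of_int \<lfloor>v\<rfloor>"

definition aL :: "real \<Rightarrow> real \<Rightarrow> nat \<Rightarrow> nat \<Rightarrow> real \<Rightarrow> nat \<Rightarrow> real" where
  "aL c \<delta> rl rh z j = (if rl \<le> j \<and> j \<le> rh then (if rl < rh then
      (if 0 < frc (ww c \<delta> rl rh z j) \<and> frc (ww c \<delta> rl rh z j) \<le> 1 / Kf rl rh then 1 else 0) else 1) else 0)"

definition aR :: "real \<Rightarrow> real \<Rightarrow> nat \<Rightarrow> nat \<Rightarrow> real \<Rightarrow> nat \<Rightarrow> real" where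
  "aR c \<delta> rl rh z j = (if rl \<le> j \<and> j \<le> rh then (if rl < rh then
      (if frc (ww c \<delta> rl rh z j) < 1 / Kf rl rh then 1 else 0) else 1) else 0)"

lemma Kf_ge: "rl < rh \<Longrightarrow> Kf rl rh \<ge> 2" "Kf rl rh \<ge> 1"
  unfolding Kf_def by auto

lemma ww_diff: "\<delta> > 0 \<Longrightarrow> ww c \<delta> rl rh y j - ww c \<delta> rl rh z j = (y - z) / (Kf rl rh * \<delta>)"
  unfolding ww_def by (simp add: diff_divide_distrib[symmetric])

lemma Q_right_j:
  assumes d: "\<delta> > 0"
  shows "\<exists>\<eta>>0. \<forall>y. z \<le> y \<and> y < z + \<eta> \<longrightarrow>
     Qf A c \<delta> rl rh y j = Qf A c \<delta> rl rh z j + aR c \<delta> rl rh z j * (y - z)"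
proof (cases "rl \<le> j \<and> j \<le> rh \<and> rl < rh")
  case False
  have "rl \<le> j \<and> j \<le> rh \<longrightarrow> rl = rh" using False by auto
  thus ?thesis
    by (intro exI[of _ 1]) (use False in \<open>auto simp: Qf_def corr_def aR_def gco_def Kf_def algebra_simps\<close>)
next
  case True
  define K where "K = Kf rl rh"
  have K: "K \<ge> 2" using Kf_ge True unfolding K_def by auto
  hence Kp: "K > 0" by simp
  let ?w = "ww c \<delta> rl rh"
  obtain \<eta> where \<eta>: "\<eta> > 0" and ph: "\<forall>v. ?w z j \<le> v \<and> v \<le> ?w z j + \<eta> \<longrightarrow>
     phi K v = phi K (?w z j) + (if ?w z j - of_int \<lfloor>?w z j\<rfloor> < 1/K then K else 0) * (v - ?w z j)"
    using phi_right[of K "?w z j"] K by auto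
  define \<sigma> where "\<sigma> = (if ?w z j - of_int \<lfloor>?w z j\<rfloor> < 1/K then K else 0)"
  have aR: "aR c \<delta> rl rh z j = \<sigma> / K" using True Kp unfolding aR_def \<sigma>_def frc_def K_def by auto
  show ?thesis
  proof (intro exI[of _ "K * \<delta> * \<eta>"] conjI allI impI)
    show "K * \<delta> * \<eta> > 0" using Kp d \<eta> by simp
    fix y assume y: "z \<le> y \<and> y < z + K * \<delta> * \<eta>"
    have wd: "?w y j - ?w z j = (y - z) / (K * \<delta>)" using ww_diff[OF d] unfolding K_def by simp
    have "(y - z) / (K * \<delta>) \<le> \<eta>" using y Kp d by (simp add: field_simps)
    moreover have "0 \<le> (y - z) / (K * \<delta>)" using y Kp d by simp
    ultimately have rr: "?w z j \<le> ?w y j \<and> ?w y j \<le> ?w z j + \<eta>" using wd by linarith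
    have "phi K (?w y j) = phi K (?w z j) + \<sigma> * (?w y j - ?w z j)" using ph rr unfolding \<sigma>_def by blast
    hence pe: "phi K (?w y j) = phi K (?w z j) + \<sigma> * ((y - z) / (K * \<delta>))" using wd by simp
    have "Qf A c \<delta> rl rh y j - Qf A c \<delta> rl rh z j =
        (y - z) / K + \<delta> * (phi K (?w y j) - phi K (?w z j)) - \<delta> * ((y - c) / (K * \<delta>) - (z - c) / (K * \<delta>))"
      using True unfolding Qf_def corr_def gco_def K_def by (simp add: algebra_simps diff_divide_distrib)
    also have "\<dots> = \<sigma> / K * (y - z)" unfolding pe using Kp d by (simp add: field_simps)
    finally show "Qf A c \<delta> rl rh y j = Qf A c \<delta> rl rh z j + aR c \<delta> rl rh z j * (y - z)"
      unfolding aR by simp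
  qed
qed

lemma Q_left_j:
  assumes d: "\<delta> > 0"
  shows "\<exists>\<eta>>0. \<forall>y. z - \<eta> < y \<and> y \<le> z \<longrightarrow>
     Qf A c \<delta> rl rh y j = Qf A c \<delta> rl rh z j + aL c \<delta> rl rh z j * (y - z)"
proof (cases "rl \<le> j \<and> j \<le> rh \<and> rl < rh")
  case False
  have "rl \<le> j \<and> j \<le> rh \<longrightarrow> rl = rh" using False by auto
  thus ?thesis
    by (intro exI[of _ 1]) (use False in \<open>auto simp: Qf_def corr_def aL_def gco_def Kf_def algebra_simps\<close>)
next
  case True
  define K where "K = Kf rl rh"
  have K: "K \<ge> 2" using Kf_ge True unfolding K_def by auto
  hence Kp: "K > 0" by simp
  let ?w = "ww c \<delta> rl rh"
  obtain \<eta> where \<eta>: "\<eta> > 0" and ph: "\<forall>v. ?w z j - \<eta> \<le> v \<and> v \<le> ?w z j \<longrightarrow>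
     phi K v = phi K (?w z j) + (if 0 < ?w z j - of_int \<lfloor>?w z j\<rfloor> \<and> ?w z j - of_int \<lfloor>?w z j\<rfloor> \<le> 1/K then K else 0) * (v - ?w z j)"
    using phi_left[of K "?w z j"] K by auto
  define \<sigma> where "\<sigma> = (if 0 < ?w z j - of_int \<lfloor>?w z j\<rfloor> \<and> ?w z j - of_int \<lfloor>?w z j\<rfloor> \<le> 1/K then K else 0)"
  have aL: "aL c \<delta> rl rh z j = \<sigma> / K" using True Kp unfolding aL_def \<sigma>_def frc_def K_def by auto
  show ?thesis
  proof (intro exI[of _ "K * \<delta> * \<eta>"] conjI allI impI)
    show "K * \<delta> * \<eta> > 0" using Kp d \<eta> by simp
    fix y assume y: "z - K * \<delta> * \<eta> < y \<and> y \<le> z"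
    have wd: "?w y j - ?w z j = (y - z) / (K * \<delta>)" using ww_diff[OF d] unfolding K_def by simp
    have "(y - z) / (K * \<delta>) \<ge> - \<eta>" using y Kp d by (simp add: field_simps)
    moreover have "(y - z) / (K * \<delta>) \<le> 0" using y Kp d by (simp add: divide_nonpos_pos)
    ultimately have rr: "?w z j - \<eta> \<le> ?w y j \<and> ?w y j \<le> ?w z j" using wd by linarith
    have "phi K (?w y j) = phi K (?w z j) + \<sigma> * (?w y j - ?w z j)" using ph rr unfolding \<sigma>_def by blast
    hence pe: "phi K (?w y j) = phi K (?w z j) + \<sigma> * ((y - z) / (K * \<delta>))" using wd by simp
    have "Qf A c \<delta> rl rh y j - Qf A c \<delta> rl rh z j =
        (y - z) / K + \<delta> * (phi K (?w y j) - phi K (?w z j)) - \<delta> * ((y - c) / (K * \<delta>) - (z - c) / (K * \<delta>))"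
      using True unfolding Qf_def corr_def gco_def K_def by (simp add: algebra_simps diff_divide_distrib)
    also have "\<dots> = \<sigma> / K * (y - z)" unfolding pe using Kp d by (simp add: field_simps)
    finally show "Qf A c \<delta> rl rh y j = Qf A c \<delta> rl rh z j + aL c \<delta> rl rh z j * (y - z)"
      unfolding aL by simp
  qed
qed

lemma Q_out: "\<not> (rl \<le> j \<and> j \<le> rh) \<Longrightarrow> Qf A c \<delta> rl rh y j = A j"
  "\<not> (rl \<le> j \<and> j \<le> rh) \<Longrightarrow> aL c \<delta> rl rh z j = 0"
  "\<not> (rl \<le> j \<and> j \<le> rh) \<Longrightarrow> aR c \<delta> rl rh z j = 0"
  unfolding Qf_def corr_def gco_def aL_def aR_def by auto

lemma aLR01: "aL c \<delta> rl rh z j \<in> {0,1}" "aR c \<delta> rl rh z j \<in> {0,1}"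
  unfolding aL_def aR_def by auto

lemma Q_right:
  assumes d: "\<delta> > 0"
  shows "\<exists>\<eta>>0. \<forall>y. z \<le> y \<and> y < z + \<eta> \<longrightarrow>
     (\<forall>j. Qf A c \<delta> rl rh y j = Qf A c \<delta> rl rh z j + aR c \<delta> rl rh z j * (y - z))"
proof -
  have "\<forall>j\<in>{rl..rh}. \<exists>\<eta>>0. \<forall>y. z \<le> y \<and> y < z + \<eta> \<longrightarrow>
     Qf A c \<delta> rl rh y j = Qf A c \<delta> rl rh z j + aR c \<delta> rl rh z j * (y - z)"
    using Q_right_j[OF d] by blast
  then obtain \<eta>f where \<eta>f: "\<forall>j\<in>{rl..rh}. \<eta>f j > 0 \<and> (\<forall>y. z \<le> y \<and> y < z + \<eta>f j \<longrightarrow>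
     Qf A c \<delta> rl rh y j = Qf A c \<delta> rl rh z j + aR c \<delta> rl rh z j * (y - z))"
    by metis
  define \<eta> where "\<eta> = Min (insert 1 (\<eta>f ` {rl..rh}))"
  have \<eta>p: "\<eta> > 0" unfolding \<eta>_def using \<eta>f by (subst Min_gr_iff) auto
  have \<eta>le: "\<eta> \<le> \<eta>f j" if "j \<in> {rl..rh}" for j unfolding \<eta>_def using that by (intro Min_le) auto
  show ?thesis
  proof (intro exI[of _ \<eta>] conjI allI impI \<eta>p)
    fix y j assume y: "z \<le> y \<and> y < z + \<eta>"
    show "Qf A c \<delta> rl rh y j = Qf A c \<delta> rl rh z j + aR c \<delta> rl rh z j * (y - z)"
    proof (cases "j \<in> {rl..rh}")
      case True
      have h: "\<forall>y. z \<le> y \<and> y < z + \<eta>f j \<longrightarrow>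
        Qf A c \<delta> rl rh y j = Qf A c \<delta> rl rh z j + aR c \<delta> rl rh z j * (y - z)" using \<eta>f True by blast
      have "z \<le> y \<and> y < z + \<eta>f j" using y \<eta>le[OF True] by linarith
      thus ?thesis using h by blast
    next
      case False thus ?thesis using Q_out[of rl j rh] by simp
    qed
  qed
qed

lemma Q_left:
  assumes d: "\<delta> > 0"
  shows "\<exists>\<eta>>0. \<forall>y. z - \<eta> < y \<and> y \<le> z \<longrightarrow>
     (\<forall>j. Qf A c \<delta> rl rh y j = Qf A c \<delta> rl rh z j + aL c \<delta> rl rh z j * (y - z))"
proof -
  have "\<forall>j\<in>{rl..rh}. \<exists>\<eta>>0. \<forall>y. z - \<eta> < y \<and> y \<le> z \<longrightarrow>
     Qf A c \<delta> rl rh y j = Qf A c \<delta> rl rh z j + aL c \<delta> rl rh z j * (y - z)"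
    using Q_left_j[OF d] by blast
  then obtain \<eta>f where \<eta>f: "\<forall>j\<in>{rl..rh}. \<eta>f j > 0 \<and> (\<forall>y. z - \<eta>f j < y \<and> y \<le> z \<longrightarrow>
     Qf A c \<delta> rl rh y j = Qf A c \<delta> rl rh z j + aL c \<delta> rl rh z j * (y - z))"
    by metis
  define \<eta> where "\<eta> = Min (insert 1 (\<eta>f ` {rl..rh}))"
  have \<eta>p: "\<eta> > 0" unfolding \<eta>_def using \<eta>f by (subst Min_gr_iff) auto
  have \<eta>le: "\<eta> \<le> \<eta>f j" if "j \<in> {rl..rh}" for j unfolding \<eta>_def using that by (intro Min_le) auto
  show ?thesis
  proof (intro exI[of _ \<eta>] conjI allI impI \<eta>p)
    fix y j assume y: "z - \<eta> < y \<and> y \<le> z"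
    show "Qf A c \<delta> rl rh y j = Qf A c \<delta> rl rh z j + aL c \<delta> rl rh z j * (y - z)"
    proof (cases "j \<in> {rl..rh}")
      case True
      have h: "\<forall>y. z - \<eta>f j < y \<and> y \<le> z \<longrightarrow>
        Qf A c \<delta> rl rh y j = Qf A c \<delta> rl rh z j + aL c \<delta> rl rh z j * (y - z)" using \<eta>f True by blast
      have "z - \<eta>f j < y \<and> y \<le> z" using y \<eta>le[OF True] by linarith
      thus ?thesis using h by blast
    next
      case False thus ?thesis using Q_out[of rl j rh] by simp
    qed
  qed
qed

lemma frc_minus:
  fixes K p :: real
  assumes "K \<ge> 1" "1 \<le> p" "p \<le> K - 1"
  shows "frc (of_int N - p / K) = 1 - p / K"
proof -
  have a: "0 < p/K" "p/K < 1" using assms by (auto simp: field_simps)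
  have fl: "\<lfloor>of_int N - p/K\<rfloor> = N - 1" using a by (intro floor_unique) auto
  show ?thesis unfolding frc_def fl by simp
qed

lemma phi_int_minus':
  fixes K :: real and p :: nat
  assumes "K \<ge> 1" "real p \<le> K - 1"
  shows "phi K (of_int N - real p / K) = of_int N"
proof (cases "p = 0")
  case True thus ?thesis by (simp add: phi_int)
next
  case False thus ?thesis using phi_int_minus[of K "real p" N] assms by simp
qed

lemma Q_at_c:
  assumes d: "\<delta> > 0" and r: "rl \<le> rh"
  shows "Qf A c \<delta> rl rh c j = A j + gco rl rh j * c"
    "aR c \<delta> rl rh c j = (if j = rh then 1 else 0)"
proof -
  define K where "K = Kf rl rh"
  have K1: "K \<ge> 1" unfolding K_def by (rule Kf_ge)
  have wc: "ww c \<delta> rl rh c j = of_int 0 - real (rh - j) / K" unfolding ww_def K_def by simp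
  have pK: "real (rh - j) \<le> K - 1" if "rl \<le> j" "j \<le> rh" using that unfolding K_def Kf_def by auto
  show "Qf A c \<delta> rl rh c j = A j + gco rl rh j * c"
    using phi_int_minus'[OF K1 pK, of 0] unfolding Qf_def corr_def wc K_def[symmetric] by auto
  show "aR c \<delta> rl rh c j = (if j = rh then 1 else 0)"
  proof (cases "rl \<le> j \<and> j \<le> rh \<and> rl < rh")
    case True
    show ?thesis
    proof (cases "j = rh")
      case True2: True
      have "frc (ww c \<delta> rl rh c j) = 0" using wc True2 by (simp add: frc_def)
      moreover have "1 / K > 0" using K1 by simp
      ultimately show ?thesis using True True2 unfolding aR_def K_def by auto
    next
      case False
      have "frc (ww c \<delta> rl rh c j) = 1 - real (rh - j) / K"
        unfolding wc by (rule frc_minus) (use K1 pK True False in auto)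
      moreover have "1 - real (rh - j) / K \<ge> 1 / K" using pK True K1 by (simp add: field_simps)
      ultimately show ?thesis using True False unfolding aR_def K_def by auto
    qed
  next
    case False thus ?thesis using r unfolding aR_def by auto
  qed
qed

lemma Q_at_d:
  assumes d: "\<delta> > 0" and r: "rl \<le> rh" and m: "\<delta> * Kf rl rh * real m = dd - c"
  shows "Qf A c \<delta> rl rh dd j = A j + gco rl rh j * dd"
    "aL c \<delta> rl rh dd j = (if j = rl then 1 else 0)"
proof -
  define K where "K = Kf rl rh"
  have K1: "K \<ge> 1" unfolding K_def by (rule Kf_ge)
  have tm: "(dd - c) / (K * \<delta>) = real m" using m d K1 unfolding K_def by (auto simp: field_simps)
  have wc: "ww c \<delta> rl rh dd j = of_int (int m) - real (rh - j) / K" unfolding ww_def K_def[symmetric] tm by simp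
  have pK: "real (rh - j) \<le> K - 1" if "rl \<le> j" "j \<le> rh" using that unfolding K_def Kf_def by auto
  show "Qf A c \<delta> rl rh dd j = A j + gco rl rh j * dd"
    using phi_int_minus'[OF K1 pK, of "int m"] unfolding Qf_def corr_def wc K_def[symmetric] tm by auto
  show "aL c \<delta> rl rh dd j = (if j = rl then 1 else 0)"
  proof (cases "rl \<le> j \<and> j \<le> rh \<and> rl < rh")
    case True
    show ?thesis
    proof (cases "j = rh")
      case True2: True
      have "frc (ww c \<delta> rl rh dd j) = 0" using wc True2 by (simp add: frc_def)
      thus ?thesis using True True2 unfolding aL_def K_def by auto
    next
      case False
      have fr: "frc (ww c \<delta> rl rh dd j) = 1 - real (rh - j) / K"
        unfolding wc by (rule frc_minus) (use K1 pK True False in auto)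
      have Kv: "K = real (rh - rl) + 1" unfolding K_def Kf_def using r by auto
      have "(1 - real (rh - j) / K \<le> 1 / K) \<longleftrightarrow> j = rl"
      proof -
        have e1: "1 - real (rh - j) / K = (K - real (rh - j)) / K" using K1 by (simp add: field_simps)
        have "(1 - real (rh - j) / K \<le> 1 / K) \<longleftrightarrow> K - real (rh - j) \<le> 1"
          unfolding e1 using K1 by (simp add: divide_le_cancel)
        also have "\<dots> \<longleftrightarrow> K - 1 \<le> real (rh - j)" by linarith
        also have "\<dots> \<longleftrightarrow> j = rl" using True unfolding Kv by auto
        finally show ?thesis .
      qed
      moreover have "0 < 1 - real (rh - j) / K" using pK True K1 by (simp add: field_simps)
      ultimately show ?thesis using True False fr unfolding aL_def K_def by auto
    qed
  next
    case False thus ?thesis using r unfolding aL_def by auto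
  qed
qed

lemma corr_bound:
  assumes d: "\<delta> > 0"
  shows "\<bar>corr c \<delta> rl rh y j\<bar> \<le> \<delta>"
proof (cases "rl \<le> j \<and> j \<le> rh \<and> rl < rh")
  case True
  define K where "K = Kf rl rh"
  have K1: "K \<ge> 1" unfolding K_def by (rule Kf_ge)
  have pK: "real (rh - j) / K < 1" "real (rh - j) / K \<ge> 0" using True K1 unfolding K_def Kf_def
    by (auto simp: field_simps)
  have "phi K (ww c \<delta> rl rh y j) - (y - c) / (K * \<delta>) = (phi K (ww c \<delta> rl rh y j) - ww c \<delta> rl rh y j) - real (rh - j) / K"
    unfolding ww_def K_def by simp
  moreover note phi_bounds[OF K1, of "ww c \<delta> rl rh y j"]
  ultimately have "\<bar>phi K (ww c \<delta> rl rh y j) - (y - c) / (K * \<delta>)\<bar> \<le> 1" using pK by linarith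
  hence "\<delta> * \<bar>phi K (ww c \<delta> rl rh y j) - (y - c) / (K * \<delta>)\<bar> \<le> \<delta> * 1" using d by (intro mult_left_mono) auto
  thus ?thesis using True d unfolding corr_def K_def by (simp add: abs_mult)
next
  case False thus ?thesis using d unfolding corr_def by auto
qed

lemma Q_S3:
  assumes d: "\<delta> > 0" and Aeq: "\<forall>j\<in>{rl..rh}. A j = A rl"
    and ha: "aL c \<delta> rl rh z a = 1" and hb: "aR c \<delta> rl rh z b = 1" and ab: "a < b"
  shows "\<forall>j\<in>{a..b}. Qf A c \<delta> rl rh z j = Qf A c \<delta> rl rh z a"
proof -
  have ina': "rl \<le> a \<and> a \<le> rh" using ha Q_out(2)[of rl a rh c \<delta> z] by (cases "rl \<le> a \<and> a \<le> rh") auto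
  have inb': "rl \<le> b \<and> b \<le> rh" using hb Q_out(3)[of rl b rh c \<delta> z] by (cases "rl \<le> b \<and> b \<le> rh") auto
  have ina: "rl \<le> a" "a \<le> rh" using ina' by auto
  have inb: "rl \<le> b" "b \<le> rh" using inb' by auto
  have rlh: "rl < rh" using ina inb ab by linarith
  define K where "K = Kf rl rh"
  have K2: "K \<ge> 2" unfolding K_def using Kf_ge rlh by auto
  have Kv: "K = real (rh - rl) + 1" unfolding K_def Kf_def using rlh by auto
  define \<tau> where "\<tau> = (z - c) / (K * \<delta>)"
  have wj: "ww c \<delta> rl rh z j = \<tau> - real (rh - j) / K" for j unfolding ww_def \<tau>_def K_def by simp
  have aLa: "aL c \<delta> rl rh z a = (if 0 < frc (ww c \<delta> rl rh z a) \<and> frc (ww c \<delta> rl rh z a) \<le> 1/K then 1 else 0)"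
    using ina' rlh unfolding aL_def K_def by simp
  have fa': "0 < frc (ww c \<delta> rl rh z a) \<and> frc (ww c \<delta> rl rh z a) \<le> 1/K"
    using ha unfolding aLa by (cases "0 < frc (ww c \<delta> rl rh z a) \<and> frc (ww c \<delta> rl rh z a) \<le> 1/K") auto
  have fa: "0 < frc (ww c \<delta> rl rh z a)" "frc (ww c \<delta> rl rh z a) \<le> 1/K" using fa' by auto
  have aRb: "aR c \<delta> rl rh z b = (if frc (ww c \<delta> rl rh z b) < 1/K then 1 else 0)"
    using inb' rlh unfolding aR_def K_def by simp
  have fb: "frc (ww c \<delta> rl rh z b) < 1/K"
    using hb unfolding aRb by (cases "frc (ww c \<delta> rl rh z b) < 1/K") auto
  define Na where "Na = \<lfloor>ww c \<delta> rl rh z a\<rfloor>"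
  define f where "f = frc (ww c \<delta> rl rh z a)"
  define dd where "dd = real (b - a)"
  have nn: "1 \<le> b - a" "b - a \<le> rh - rl" using ab ina inb by arith+
  have dd1: "1 \<le> dd" "dd \<le> K - 1" unfolding dd_def Kv using nn by simp_all
  have wb: "ww c \<delta> rl rh z b = Na + (f + dd / K)"
  proof -
    have "real (rh - a) = real (rh - b) + dd" unfolding dd_def using ab inb by auto
    hence "ww c \<delta> rl rh z a = ww c \<delta> rl rh z b - dd / K" unfolding wj by (simp add: add_divide_distrib)
    thus ?thesis unfolding f_def frc_def Na_def by simp
  qed
  have Kp: "K > 0" using K2 by simp
  have t1: "f + dd / K \<le> 1"
  proof -
    have "dd / K \<le> (K - 1) / K" using dd1 Kp by (intro divide_right_mono) auto
    also have "\<dots> = 1 - 1/K" using Kp by (simp add: field_simps)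
    finally show ?thesis using fa unfolding f_def by linarith
  qed
  have dK: "dd / K \<ge> 1 / K" using dd1 Kp by (intro divide_right_mono) auto
  have t2: "f + dd / K = 1"
  proof (rule ccontr)
    assume "f + dd / K \<noteq> 1"
    hence lt: "f + dd / K < 1" using t1 by simp
    have "0 \<le> f" unfolding f_def frc_def by linarith
    have "1 / K > 0" using Kp by simp
    hence t0: "0 \<le> f + dd / K" using \<open>0 \<le> f\<close> dK by linarith
    have fl0: "\<lfloor>f + dd / K\<rfloor> = 0" using lt t0 by (simp add: floor_eq_iff)
    have "frc (ww c \<delta> rl rh z b) = f + dd / K" unfolding frc_def wb using fl0 by simp
    thus False using fb dK \<open>0 \<le> f\<close> by linarith
  qed
  have "dd / K \<ge> (K - 1) / K"
  proof -
    have "dd / K = 1 - f" using t2 by simp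
    also have "\<dots> \<ge> 1 - 1/K" using fa unfolding f_def by simp
    also have "1 - 1/K = (K - 1)/K" using Kp by (simp add: field_simps)
    finally show ?thesis .
  qed
  hence "dd \<ge> K - 1" using Kp by (simp add: divide_le_cancel)
  hence "dd = K - 1" using dd1 by simp
  hence "b - a = rh - rl" unfolding dd_def Kv using nn by simp
  hence arl: "a = rl" and brh: "b = rh" using ina inb ab by arith+
  have "ww c \<delta> rl rh z b = \<tau>" using wj[of b] brh by simp
  hence tau: "\<tau> = of_int (Na + 1)" using wb t2 by simp
  have Q: "Qf A c \<delta> rl rh z j = A rl + z / K" if j: "j \<in> {rl..rh}" for j
  proof -
    have pK: "real (rh - j) \<le> K - 1" using j unfolding Kv by auto
    have "phi K (ww c \<delta> rl rh z j) = \<tau>" unfolding wj tau using phi_int_minus'[OF _ pK, of "Na + 1"] K2 by simp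
    hence c0: "corr c \<delta> rl rh z j = 0" using j rlh unfolding corr_def K_def[symmetric] \<tau>_def[symmetric] by simp
    have g: "gco rl rh j = 1/K" using j unfolding gco_def K_def by simp
    have "A j = A rl" using Aeq j by blast
    thus ?thesis unfolding Qf_def c0 g by simp
  qed
  show ?thesis using Q arl brh by auto
qed

lemma sum_rev_block: "(\<Sum>j\<in>{rl..rh}. h (rh - j)) = (\<Sum>p<rh - rl + 1. h p)" if "rl \<le> rh" for h :: "nat \<Rightarrow> real"
  by (rule sum.reindex_bij_witness[of _ "\<lambda>p. rh - p" "\<lambda>j. rh - j"]) (use that in auto)

lemma corr_sum_block:
  assumes d: "\<delta> > 0" and r: "rl \<le> rh"
  shows "(\<Sum>j\<in>{rl..rh}. corr c \<delta> rl rh y j) = 0"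
proof (cases "rl < rh")
  case False thus ?thesis unfolding corr_def by simp
next
  case True
  define Kn where "Kn = rh - rl + 1"
  have KK: "Kf rl rh = real Kn" unfolding Kf_def Kn_def ..
  have Kn1: "Kn \<ge> 1" unfolding Kn_def by simp
  define \<tau> where "\<tau> = (y - c) / (real Kn * \<delta>)"
  have "(\<Sum>j\<in>{rl..rh}. corr c \<delta> rl rh y j) = (\<Sum>j\<in>{rl..rh}. \<delta> * (phi Kn (\<tau> - real (rh - j) / Kn) - \<tau>))"
    using True unfolding corr_def ww_def KK \<tau>_def by (intro sum.cong) auto
  also have "\<dots> = (\<Sum>p<Kn. \<delta> * (phi Kn (\<tau> - real p / Kn) - \<tau>))"
    using sum_rev_block[OF r, of "\<lambda>p. \<delta> * (phi Kn (\<tau> - real p / Kn) - \<tau>)"] unfolding Kn_def by simp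
  also have "\<dots> = \<delta> * ((\<Sum>p<Kn. phi Kn (\<tau> - real p / Kn)) - Kn * \<tau>)"
    by (simp add: sum_distrib_left sum_subtractf right_diff_distrib)
  also have "\<dots> = 0" using phi_sum[OF Kn1] by simp
  finally show ?thesis .
qed

lemma corr_sum:
  assumes d: "\<delta> > 0" and r: "rl \<le> rh" and S: "finite S" "{rl..rh} \<subseteq> S"
  shows "(\<Sum>j\<in>S. corr c \<delta> rl rh y j) = 0"
proof -
  have "(\<Sum>j\<in>S. corr c \<delta> rl rh y j) = (\<Sum>j\<in>{rl..rh}. corr c \<delta> rl rh y j)"
    by (rule sum.mono_neutral_right[OF S(1) S(2)]) (auto simp: corr_def)
  thus ?thesis using corr_sum_block[OF d r] by simp
qed

lemma corr_mono:
  assumes d: "\<delta> > 0" and j: "rl \<le> j" "Suc j \<le> rh"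
  shows "corr c \<delta> rl rh y j \<le> corr c \<delta> rl rh y (Suc j)"
proof -
  have K1: "Kf rl rh \<ge> 1" by (rule Kf_ge)
  have "ww c \<delta> rl rh y j \<le> ww c \<delta> rl rh y (Suc j)"
    unfolding ww_def using K1 j by (intro diff_left_mono divide_right_mono) auto
  hence "phi (Kf rl rh) (ww c \<delta> rl rh y j) \<le> phi (Kf rl rh) (ww c \<delta> rl rh y (Suc j))"
    by (rule phi_mono[OF K1])
  thus ?thesis using j d unfolding corr_def by auto
qed

lemma corr_top:
  assumes d: "\<delta> > 0" and r: "rl < rh" and m: "\<delta> * Kf rl rh * real m = dd - c" and y: "y \<le> dd"
  shows "corr c \<delta> rl rh y rh \<le> (dd - y) / Kf rl rh"
proof -
  define K where "K = Kf rl rh"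
  have K1: "K \<ge> 1" unfolding K_def by (rule Kf_ge)
  have tm: "(dd - c) / (K * \<delta>) = real m" using m d K1 unfolding K_def by (auto simp: field_simps)
  define \<tau> where "\<tau> = (y - c) / (K * \<delta>)"
  have "\<tau> \<le> real m" unfolding \<tau>_def tm[symmetric] using y d K1 by (intro divide_right_mono) auto
  hence "phi K \<tau> \<le> phi K (of_int (int m))" by (intro phi_mono[OF K1]) simp
  hence ph: "phi K \<tau> \<le> real m" using phi_int[of K "int m"] by simp
  have "corr c \<delta> rl rh y rh = \<delta> * (phi K \<tau> - \<tau>)"
    using r unfolding corr_def ww_def K_def[symmetric] \<tau>_def by simp
  also have "\<dots> \<le> \<delta> * (real m - \<tau>)" using ph d by (intro mult_left_mono) auto
  also have "\<delta> * (real m - \<tau>) = (dd - y) / K" unfolding \<tau>_def tm[symmetric] using d K1 by (simp add: field_simps)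
  finally show ?thesis unfolding K_def .
qed

lemma corr_bot:
  assumes d: "\<delta> > 0" and r: "rl < rh" and y: "c \<le> y"
  shows "corr c \<delta> rl rh y rl \<ge> - (y - c) / Kf rl rh"
proof -
  define K where "K = Kf rl rh"
  have K2: "K \<ge> 2" unfolding K_def using Kf_ge r by auto
  have Kv: "K = real (rh - rl) + 1" unfolding K_def Kf_def using r by auto
  define \<tau> where "\<tau> = (y - c) / (K * \<delta>)"
  have t0: "\<tau> \<ge> 0" unfolding \<tau>_def using y d K2 by simp
  have pK: "real (rh - rl) \<le> K - 1" unfolding Kv by simp
  have "phi K (of_int 0 - real (rh - rl) / K) = 0" using phi_int_minus'[OF _ pK, of 0] K2 by simp
  moreover have "phi K (of_int 0 - real (rh - rl) / K) \<le> phi K (\<tau> - real (rh - rl) / K)"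
    using t0 K2 by (intro phi_mono) auto
  ultimately have ph: "phi K (\<tau> - real (rh - rl) / K) \<ge> 0" by simp
  have "corr c \<delta> rl rh y rl = \<delta> * (phi K (\<tau> - real (rh - rl) / K) - \<tau>)"
    using r unfolding corr_def ww_def K_def[symmetric] \<tau>_def by simp
  also have "\<dots> \<ge> \<delta> * (0 - \<tau>)" using ph d by (intro mult_left_mono) auto
  also have "\<delta> * (0 - \<tau>) = - (y - c) / K" unfolding \<tau>_def using d K2 by (simp add: field_simps)
  finally show ?thesis unfolding K_def .
qed



locale gsys =
  fixes n :: nat and I :: "real set" and Pt :: "real \<Rightarrow> nat \<Rightarrow> real" and eps :: real
  assumes n2: "n \<ge> 2" and Iint: "is_interval I" and Ipos: "I \<subseteq> {0..}" and Iin: "interior I \<noteq> {}"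
    and G: "gen_n_system n I Pt" and eps: "eps > 0"
begin

abbreviation "DD \<equiv> nondiff_set n I Pt"

lemmas Gu = G[unfolded gen_n_system_def]
lemmas cpl = Gu[THEN conjunct1]
lemmas S1 = Gu[THEN conjunct2, THEN conjunct1]
lemmas G2 = Gu[THEN conjunct2, THEN conjunct2, THEN conjunct1]
lemmas G3 = Gu[THEN conjunct2, THEN conjunct2, THEN conjunct2]
lemmas Cu = cpl[unfolded cont_piecewise_linear_def]
lemmas contPt = Cu[THEN conjunct1]
lemmas discr = Cu[THEN conjunct2, THEN conjunct1]

lemma DD_sub: "DD \<subseteq> I" unfolding nondiff_set_def by auto

lemma notD: "x \<in> I \<Longrightarrow> x \<notin> DD \<Longrightarrow> x \<in> interior I \<and> (\<forall>j\<in>{1..n}. (\<lambda>t. Pt t j) differentiable (at x))"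
  unfolding nondiff_set_def by auto

lemma bddbI: "bdd_below I" using Ipos unfolding bdd_below_def by auto

lemma inI: "a \<in> I \<Longrightarrow> b \<in> I \<Longrightarrow> a \<le> y \<Longrightarrow> y \<le> b \<Longrightarrow> y \<in> I"
  using Iint unfolding is_interval_1 by blast

definition "Bl x = {y\<in>DD. y < x}"
definition "Ab x = {y\<in>DD. x < y}"
definition "lo x = (if Bl x \<noteq> {} then Sup (Bl x) else Inf I)"
definition "fin x = (Ab x \<noteq> {} \<or> bdd_above I)"
definition "hi x = (if Ab x \<noteq> {} then Inf (Ab x) else Sup I)"
definition "cmpt x = {y. lo x < y \<and> (fin x \<longrightarrow> y < hi x)}"

lemma Bl_le: "z \<in> Bl x \<Longrightarrow> z \<le> lo x"
  unfolding lo_def by (auto intro!: cSup_upper simp: bdd_above_def Bl_def) (meson less_imp_le)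

lemma Ab_ge: "z \<in> Ab x \<Longrightarrow> hi x \<le> z"
  unfolding hi_def by (auto intro!: cInf_lower simp: bdd_below_def Ab_def) (meson less_imp_le)

lemma comp_props:
  assumes x: "x \<in> I" "x \<notin> DD"
  shows "lo x < x" "fin x \<Longrightarrow> x < hi x" "cmpt x \<subseteq> I" "cmpt x \<inter> DD = {}" "x \<in> cmpt x"
proof -
  obtain e0 where e0: "e0 > 0" "\<forall>z\<in>DD. \<bar>z - x\<bar> < e0 \<longrightarrow> z = x" using discr x by blast
  obtain r where r: "r > 0" "ball x r \<subseteq> I" using notD[OF x] by (meson mem_interior)
  have xm: "x - r/2 \<in> I" "x + r/2 \<in> I" using r by (auto simp: dist_real_def subset_iff)
  show lox: "lo x < x"
  proof (cases "Bl x \<noteq> {}")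
    case True
    have "Sup (Bl x) \<le> x - e0"
    proof (rule cSup_least[OF True])
      fix z assume z: "z \<in> Bl x"
      show "z \<le> x - e0"
      proof (rule ccontr)
        assume "\<not> z \<le> x - e0"
        hence "\<bar>z - x\<bar> < e0" using z unfolding Bl_def by auto
        thus False using e0 z x unfolding Bl_def by auto
      qed
    qed
    thus ?thesis unfolding lo_def using True e0 by simp
  next
    case False
    have "Inf I \<le> x - r/2" by (rule cInf_lower[OF xm(1) bddbI])
    thus ?thesis unfolding lo_def using False r by simp
  qed
  show hix: "x < hi x" if f: "fin x"
  proof (cases "Ab x \<noteq> {}")
    case True
    have "x + e0 \<le> Inf (Ab x)"
    proof (rule cInf_greatest[OF True])
      fix z assume z: "z \<in> Ab x"
      show "x + e0 \<le> z"
      proof (rule ccontr)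
        assume "\<not> x + e0 \<le> z"
        hence "\<bar>z - x\<bar> < e0" using z unfolding Ab_def by auto
        thus False using e0 z x unfolding Ab_def by auto
      qed
    qed
    thus ?thesis unfolding hi_def using True e0 by simp
  next
    case False
    hence "bdd_above I" using f unfolding fin_def by simp
    hence "x + r/2 \<le> Sup I" by (rule cSup_upper[OF xm(2)])
    thus ?thesis unfolding hi_def using False r by simp
  qed
  show "x \<in> cmpt x" unfolding cmpt_def using lox hix by auto
  show "cmpt x \<subseteq> I"
  proof
    fix y assume y: "y \<in> cmpt x"
    show "y \<in> I"
    proof (cases "y \<le> x")
      case True
      obtain a where a: "a \<in> I" "a \<le> y"
      proof (cases "Bl x \<noteq> {}")
        case True
        then obtain z where z: "z \<in> Bl x" by blast
        have "z \<le> lo x" by (rule Bl_le[OF z])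
        thus ?thesis using that[of z] z y DD_sub unfolding Bl_def cmpt_def by auto
      next
        case False
        hence "Inf I < y" using y unfolding cmpt_def lo_def by simp
        then obtain a where "a \<in> I" "a < y" using cInf_less_iff[OF _ bddbI] x by blast
        thus ?thesis using that[of a] by auto
      qed
      thus ?thesis using inI[OF a(1) x(1) a(2) True] by simp
    next
      case False
      obtain b where b: "b \<in> I" "y \<le> b"
      proof (cases "fin x")
        case f: True
        show ?thesis
        proof (cases "Ab x \<noteq> {}")
          case True
          then obtain z where z: "z \<in> Ab x" by blast
          have "hi x \<le> z" by (rule Ab_ge[OF z])
          thus ?thesis using that[of z] z y f DD_sub unfolding Ab_def cmpt_def by auto
        next
          case False
          hence bI: "bdd_above I" using f unfolding fin_def by simp
          have "y < Sup I" using y f False unfolding cmpt_def hi_def by simp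
          then obtain b where "b \<in> I" "y < b" using less_cSup_iff[OF _ bI] x by blast
          thus ?thesis using that[of b] by auto
        qed
      next
        case False
        hence "\<not> bdd_above I" unfolding fin_def by simp
        then obtain b where "b \<in> I" "y < b" unfolding bdd_above_def by (meson not_le)
        thus ?thesis using that[of b] by auto
      qed
      thus ?thesis using inI[OF x(1) b(1) _ b(2)] False by simp
    qed
  qed
  show "cmpt x \<inter> DD = {}"
  proof (rule ccontr)
    assume "cmpt x \<inter> DD \<noteq> {}"
    then obtain y where y: "y \<in> cmpt x" "y \<in> DD" by blast
    have "y \<noteq> x" using x y by auto
    then consider "y < x" | "y > x" by linarith
    thus False
    proof cases
      case 1
      hence "y \<in> Bl x" using y unfolding Bl_def by auto
      hence "y \<le> lo x" by (rule Bl_le)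
      thus False using y unfolding cmpt_def by auto
    next
      case 2
      hence ya: "y \<in> Ab x" using y unfolding Ab_def by auto
      hence "hi x \<le> y" by (rule Ab_ge)
      moreover have "fin x" using ya unfolding fin_def by auto
      ultimately show False using y unfolding cmpt_def by auto
    qed
  qed
qed

lemma comp_same:
  assumes x: "x \<in> I" "x \<notin> DD" and y: "y \<in> cmpt x"
  shows "Bl y = Bl x" "Ab y = Ab x" "lo y = lo x" "hi y = hi x" "fin y = fin x" "cmpt y = cmpt x"
proof -
  note cp = comp_props[OF x]
  show Bl: "Bl y = Bl x"
  proof (intro set_eqI iffI)
    fix z assume z: "z \<in> Bl y"
    show "z \<in> Bl x"
    proof (rule ccontr)
      assume "z \<notin> Bl x"
      moreover have "z \<noteq> x" using z x unfolding Bl_def by auto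
      ultimately have "x < z" using z unfolding Bl_def by auto
      moreover have "z < y" using z unfolding Bl_def by auto
      ultimately have "z \<in> cmpt x" using y cp(1) unfolding cmpt_def by auto
      thus False using cp(4) z unfolding Bl_def by auto
    qed
  next
    fix z assume z: "z \<in> Bl x"
    have "z < y"
    proof (cases "x \<le> y")
      case True thus ?thesis using z unfolding Bl_def by auto
    next
      case False
      have "z \<le> lo x" by (rule Bl_le[OF z])
      thus ?thesis using y unfolding cmpt_def by auto
    qed
    thus "z \<in> Bl y" using z unfolding Bl_def by auto
  qed
  show Ab: "Ab y = Ab x"
  proof (intro set_eqI iffI)
    fix z assume z: "z \<in> Ab y"
    show "z \<in> Ab x"
    proof (rule ccontr)
      assume "z \<notin> Ab x"
      moreover have "z \<noteq> x" using z x unfolding Ab_def by auto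
      ultimately have "z < x" using z unfolding Ab_def by auto
      moreover have "y < z" using z unfolding Ab_def by auto
      ultimately have "z \<in> cmpt x" using y cp(2) unfolding cmpt_def by auto
      thus False using cp(4) z unfolding Ab_def by auto
    qed
  next
    fix z assume z: "z \<in> Ab x"
    have "y < z"
    proof (cases "y \<le> x")
      case True thus ?thesis using z unfolding Ab_def by auto
    next
      case False
      have "hi x \<le> z" by (rule Ab_ge[OF z])
      moreover have "fin x" using z unfolding fin_def by auto
      ultimately show ?thesis using y unfolding cmpt_def by auto
    qed
    thus "z \<in> Ab y" using z unfolding Ab_def by auto
  qed
  show "lo y = lo x" unfolding lo_def Bl ..
  show "hi y = hi x" unfolding hi_def Ab ..
  show "fin y = fin x" unfolding fin_def Ab ..
  thus "cmpt y = cmpt x" unfolding cmpt_def lo_def hi_def Bl Ab by simp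
qed

lemma comp_open: "open (cmpt x)" "is_interval (cmpt x)"
proof -
  have "cmpt x = (if fin x then {lo x<..<hi x} else {lo x<..})" unfolding cmpt_def by auto
  thus "open (cmpt x)" "is_interval (cmpt x)" by (auto simp: is_interval_1)
qed

end


lemma cont_ext_left:
  fixes f :: "real \<Rightarrow> real"
  assumes f: "continuous_on I f" and x: "x1 < x" "{x1..x} \<subseteq> I"
    and eq: "\<And>y. x1 < y \<Longrightarrow> y < x \<Longrightarrow> f y = A + s * y"
  shows "f x = A + s * x"
proof -
  have "continuous_on {x1..x} f" using f x(2) by (rule continuous_on_subset)
  hence "continuous (at x within {x1..x}) f" using x(1) by (simp add: continuous_on_eq_continuous_within)
  hence l1: "(f \<longlongrightarrow> f x) (at_left x)" using at_within_Icc_at_left[OF x(1)] by (simp add: continuous_within)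
  have ev: "\<forall>\<^sub>F y in at_left x. A + s * y = f y"
    using eventually_at_left_real[OF x(1)] by eventually_elim (use eq in auto)
  have "((\<lambda>y. A + s * y) \<longlongrightarrow> A + s * x) (at_left x)" by (intro tendsto_intros)
  hence "(f \<longlongrightarrow> A + s * x) (at_left x)" using ev by (rule Lim_transform_eventually)
  thus ?thesis using l1 tendsto_unique[OF trivial_limit_at_left_real] by blast
qed

lemma cont_ext_right:
  fixes f :: "real \<Rightarrow> real"
  assumes f: "continuous_on I f" and x: "x < x2" "{x..x2} \<subseteq> I"
    and eq: "\<And>y. x < y \<Longrightarrow> y < x2 \<Longrightarrow> f y = A + s * y"
  shows "f x = A + s * x"
proof -
  have "continuous_on {x..x2} f" using f x(2) by (rule continuous_on_subset)
  hence "continuous (at x within {x..x2}) f" using x(1) by (simp add: continuous_on_eq_continuous_within)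
  hence l1: "(f \<longlongrightarrow> f x) (at_right x)" using at_within_Icc_at_right[OF x(1)] by (simp add: continuous_within)
  have ev: "\<forall>\<^sub>F y in at_right x. A + s * y = f y"
    using eventually_at_right_real[OF x(1)] by eventually_elim (use eq in auto)
  have "((\<lambda>y. A + s * y) \<longlongrightarrow> A + s * x) (at_right x)" by (intro tendsto_intros)
  hence "(f \<longlongrightarrow> A + s * x) (at_right x)" using ev by (rule Lim_transform_eventually)
  thus ?thesis using l1 tendsto_unique[OF trivial_limit_at_right_real] by blast
qed

lemma lim_right_le:
  fixes u v s c h :: real
  assumes "h > 0" "\<And>t. c < t \<Longrightarrow> t < c + h \<Longrightarrow> u \<le> v + s * t"
  shows "u \<le> v + s * c"
proof (rule tendsto_le[OF trivial_limit_at_right_real])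
  show "((\<lambda>t. v + s * t) \<longlongrightarrow> v + s * c) (at_right c)" by (intro tendsto_intros)
  show "((\<lambda>t. u) \<longlongrightarrow> u) (at_right c)" by simp
  show "\<forall>\<^sub>F t in at_right c. u \<le> v + s * t"
    using eventually_at_right_real[of c "c + h"] assms by (auto elim!: eventually_mono)
qed

lemma lim_left_le:
  fixes u v s d h :: real
  assumes "h > 0" "\<And>t. d - h < t \<Longrightarrow> t < d \<Longrightarrow> v + s * t \<le> u"
  shows "v + s * d \<le> u"
proof (rule tendsto_le[OF trivial_limit_at_left_real])
  show "((\<lambda>t. v + s * t) \<longlongrightarrow> v + s * d) (at_left d)" by (intro tendsto_intros)
  show "((\<lambda>t. u) \<longlongrightarrow> u) (at_left d)" by simp
  show "\<forall>\<^sub>F t in at_left d. v + s * t \<le> u"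
    using eventually_at_left_real[of "d - h" d] assms by (auto elim!: eventually_mono)
qed

context gsys begin

definition "blkP x rl rh \<longleftrightarrow> 1 \<le> rl \<and> rl \<le> rh \<and> rh \<le> n \<and>
   (\<forall>y\<in>cmpt x. \<forall>j\<in>{rl..rh}. Pt y j = Pt y rl) \<and>
   (\<forall>y\<in>cmpt x. \<forall>j\<in>{1..n}. ((\<lambda>t. Pt t j) has_real_derivative gco rl rh j) (at y))"
definition "bk x = (SOME p. blkP x (fst p) (snd p))"
definition "rlx x = fst (bk x)"
definition "rhx x = snd (bk x)"

lemma blk:
  assumes x: "x \<in> I" "x \<notin> DD"
  shows "blkP x (rlx x) (rhx x)"
proof -
  note cp = comp_props[OF x]
  have H: "diff_subinterval n I Pt (cmpt x)"
    unfolding diff_subinterval_def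
  proof (intro conjI ballI)
    show "cmpt x \<subseteq> I" "open (cmpt x)" "is_interval (cmpt x)" "cmpt x \<noteq> {}"
      using cp comp_open by auto
    fix y j assume y: "y \<in> cmpt x" and j: "j \<in> {1..n}"
    have "y \<in> I" "y \<notin> DD" using y cp by auto
    thus "(\<lambda>t. Pt t j) differentiable (at y)" using notD j by blast
  qed
  obtain rl rh where b: "1 \<le> rl \<and> rl \<le> rh \<and> rh \<le> n \<and>
           (\<forall>x\<in>cmpt x. \<forall>j\<in>{rl..rh}. Pt x j = Pt x rl) \<and>
           (\<forall>x\<in>cmpt x. \<forall>j\<in>{1..n}.
              ((\<lambda>t. Pt t j) has_real_derivative
                 (if rl \<le> j \<and> j \<le> rh then 1 / real (rh - rl + 1) else 0)) (at x))"
    using G2[rule_format, OF H] by (elim exE) (rule that)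
  have d: "\<forall>y\<in>cmpt x. \<forall>j\<in>{1..n}. ((\<lambda>t. Pt t j) has_real_derivative gco rl rh j) (at y)"
    unfolding gco_def Kf_def using b by blast
  have "blkP x rl rh" unfolding blkP_def using b d by blast
  hence "\<exists>p. blkP x (fst p) (snd p)" by (intro exI[of _ "(rl, rh)"]) simp
  hence "blkP x (fst (bk x)) (snd (bk x))" unfolding bk_def by (rule someI_ex)
  thus ?thesis unfolding rlx_def rhx_def .
qed

lemma blk_same:
  assumes x: "x \<in> I" "x \<notin> DD" and y: "y \<in> cmpt x"
  shows "rlx y = rlx x" "rhx y = rhx x"
proof -
  have "blkP y = blkP x" unfolding blkP_def[abs_def] comp_same(6)[OF x y] ..
  thus "rlx y = rlx x" "rhx y = rhx x" unfolding rlx_def rhx_def bk_def by simp_all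
qed

lemma blk_facts:
  assumes x: "x \<in> I" "x \<notin> DD"
  shows "1 \<le> rlx x" "rlx x \<le> rhx x" "rhx x \<le> n"
    "\<And>y j. y \<in> cmpt x \<Longrightarrow> j \<in> {rlx x..rhx x} \<Longrightarrow> Pt y j = Pt y (rlx x)"
    "\<And>y j. y \<in> cmpt x \<Longrightarrow> j \<in> {1..n} \<Longrightarrow> ((\<lambda>t. Pt t j) has_real_derivative gco (rlx x) (rhx x) j) (at y)"
  using blk[OF x] unfolding blkP_def by blast+

definition "Ax x j = Pt x j - gco (rlx x) (rhx x) j * x"

lemma Pt_aff:
  assumes x: "x \<in> I" "x \<notin> DD" and y: "y \<in> cmpt x" and j: "j \<in> {1..n}"
  shows "Pt y j = Ax x j + gco (rlx x) (rhx x) j * y"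
proof -
  define s where "s = gco (rlx x) (rhx x) j"
  have der: "((\<lambda>t. Pt t j - s * t) has_derivative (\<lambda>h. 0)) (at z)" if "z \<in> cmpt x" for z
  proof -
    have "((\<lambda>t. Pt t j) has_real_derivative s) (at z)" using blk_facts(5)[OF x that j] unfolding s_def .
    hence "((\<lambda>t. Pt t j - s * t) has_real_derivative (s - s * 1)) (at z)"
      by (intro derivative_eq_intros) auto
    hence "((\<lambda>t. Pt t j - s * t) has_real_derivative 0) (at z)" by simp
    moreover have "(*) (0::real) = (\<lambda>h. 0)" by auto
    ultimately show ?thesis unfolding has_field_derivative_def by simp
  qed
  have conn: "connected (cmpt x)" using comp_open(2) by (simp add: is_interval_connected)
  have "Pt y j - s * y = Pt x j - s * x"
    by (rule has_derivative_zero_unique_connected[OF comp_open(1) conn der y comp_props(5)[OF x]])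
  thus ?thesis unfolding Ax_def s_def by simp
qed

lemma Ax_same:
  assumes x: "x \<in> I" "x \<notin> DD" and y: "y \<in> cmpt x" and j: "j \<in> {1..n}"
  shows "Ax y j = Ax x j"
  using Pt_aff[OF x y j] blk_same[OF x y] unfolding Ax_def by simp

definition "Kx x = Kf (rlx x) (rhx x)"
definition "mx x = nat \<lceil>(hi x - lo x) / (Kx x * eps)\<rceil> + 1"
definition "dlt x = (if fin x then (hi x - lo x) / (Kx x * real (mx x)) else eps)"
definition "PP y j = (if y \<in> I \<and> y \<notin> DD then Qf (Ax y) (lo y) (dlt y) (rlx y) (rhx y) y j else Pt y j)"

lemma dlt:
  assumes x: "x \<in> I" "x \<notin> DD"
  shows "dlt x > 0" "dlt x \<le> eps" "fin x \<Longrightarrow> dlt x * Kx x * real (mx x) = hi x - lo x"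
proof -
  have K1: "Kx x \<ge> 1" unfolding Kx_def by (rule Kf_ge)
  have m1: "real (mx x) \<ge> 1" unfolding mx_def by simp
  show "dlt x > 0"
  proof (cases "fin x")
    case True
    have "hi x - lo x > 0" using comp_props[OF x] True by auto
    thus ?thesis using True K1 m1 unfolding dlt_def by simp
  next
    case False thus ?thesis using eps unfolding dlt_def by simp
  qed
  show "fin x \<Longrightarrow> dlt x * Kx x * real (mx x) = hi x - lo x"
    using K1 m1 unfolding dlt_def by simp
  show "dlt x \<le> eps"
  proof (cases "fin x")
    case True
    have "(hi x - lo x) / (Kx x * eps) \<le> real (mx x)"
      unfolding mx_def by linarith
    hence "(hi x - lo x) \<le> real (mx x) * (Kx x * eps)" using K1 eps by (simp add: divide_le_eq)
    hence "(hi x - lo x) / (Kx x * real (mx x)) \<le> eps" using K1 m1 by (simp add: divide_le_eq algebra_simps)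
    thus ?thesis using True unfolding dlt_def by simp
  next
    case False thus ?thesis unfolding dlt_def by simp
  qed
qed

lemma PP_eq: "y \<in> I \<Longrightarrow> y \<notin> DD \<Longrightarrow> PP y j = Pt y j + corr (lo y) (dlt y) (rlx y) (rhx y) y j"
  unfolding PP_def Qf_def Ax_def by simp

lemma PP_comp:
  assumes x: "x \<in> I" "x \<notin> DD" and y: "y \<in> cmpt x" and j: "j \<in> {1..n}"
  shows "PP y j = Qf (Ax x) (lo x) (dlt x) (rlx x) (rhx x) y j"
proof -
  have yI: "y \<in> I" "y \<notin> DD" using y comp_props[OF x] by auto
  note cs = comp_same[OF x y] and bs = blk_same[OF x y]
  have "dlt y = dlt x" unfolding dlt_def mx_def Kx_def cs bs ..
  thus ?thesis using yI Ax_same[OF x y j] unfolding PP_def Qf_def cs bs by simp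
qed

end


context gsys begin

lemma left_pt:
  assumes x: "x \<in> DD" and y0: "y0 \<in> I" "y0 < x"
  shows "\<exists>x1. x1 \<in> I \<and> x1 \<notin> DD \<and> x1 < x \<and> fin x1 \<and> hi x1 = x"
proof -
  have xI: "x \<in> I" using x DD_sub by blast
  obtain e0 where e0: "e0 > 0" "\<forall>z\<in>DD. \<bar>z - x\<bar> < e0 \<longrightarrow> z = x" using discr xI by blast
  define e1 where "e1 = min e0 (x - y0)"
  have e1: "e1 > 0" "e1 \<le> e0" "e1 \<le> x - y0" using e0 y0 unfolding e1_def by auto
  define x1 where "x1 = x - e1/2"
  have x1I: "x1 \<in> I" using inI[OF y0(1) xI, of x1] e1 unfolding x1_def by auto
  have x1D: "x1 \<notin> DD"
  proof
    assume "x1 \<in> DD"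
    hence "x1 = x" using e0(2) e1 unfolding x1_def by auto
    thus False using e1 unfolding x1_def by auto
  qed
  have xA: "x \<in> Ab x1" using x e1 unfolding Ab_def x1_def by auto
  have "Inf (Ab x1) = x"
  proof (rule cInf_eq_minimum[OF xA])
    fix z assume z: "z \<in> Ab x1"
    show "x \<le> z"
    proof (rule ccontr)
      assume "\<not> x \<le> z"
      hence "\<bar>z - x\<bar> < e0" using z e1 unfolding Ab_def x1_def by auto
      hence "z = x" using e0(2) z unfolding Ab_def by auto
      thus False using \<open>\<not> x \<le> z\<close> by simp
    qed
  qed
  hence "hi x1 = x" "fin x1" using xA unfolding hi_def fin_def by auto
  thus ?thesis using x1I x1D e1 unfolding x1_def by (intro exI[of _ "x - e1/2"]) auto
qed

lemma right_pt:
  assumes x: "x \<in> DD" and y0: "y0 \<in> I" "x < y0"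
  shows "\<exists>x2. x2 \<in> I \<and> x2 \<notin> DD \<and> x < x2 \<and> lo x2 = x"
proof -
  have xI: "x \<in> I" using x DD_sub by blast
  obtain e0 where e0: "e0 > 0" "\<forall>z\<in>DD. \<bar>z - x\<bar> < e0 \<longrightarrow> z = x" using discr xI by blast
  define e1 where "e1 = min e0 (y0 - x)"
  have e1: "e1 > 0" "e1 \<le> e0" "e1 \<le> y0 - x" using e0 y0 unfolding e1_def by auto
  define x2 where "x2 = x + e1/2"
  have x2I: "x2 \<in> I" using inI[OF xI y0(1), of x2] e1 unfolding x2_def by auto
  have x2D: "x2 \<notin> DD"
  proof
    assume "x2 \<in> DD"
    hence "x2 = x" using e0(2) e1 unfolding x2_def by auto
    thus False using e1 unfolding x2_def by auto
  qed
  have xB: "x \<in> Bl x2" using x e1 unfolding Bl_def x2_def by auto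
  have "Sup (Bl x2) = x"
  proof (rule cSup_eq_maximum[OF xB])
    fix z assume z: "z \<in> Bl x2"
    show "z \<le> x"
    proof (rule ccontr)
      assume "\<not> z \<le> x"
      hence "\<bar>z - x\<bar> < e0" using z e1 unfolding Bl_def x2_def by auto
      hence "z = x" using e0(2) z unfolding Bl_def by auto
      thus False using \<open>\<not> z \<le> x\<close> by simp
    qed
  qed
  hence "lo x2 = x" using xB unfolding lo_def by auto
  thus ?thesis using x2I x2D e1 unfolding x2_def by (intro exI[of _ "x + e1/2"]) auto
qed

lemma left_data:
  assumes x: "x \<in> DD" and x1: "x1 \<in> I" "x1 \<notin> DD" "x1 < x" "fin x1" "hi x1 = x"
  shows "\<exists>e>0. (\<forall>y\<in>I. x - e < y \<and> y \<le> x \<longrightarrow>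
      (\<forall>j\<in>{1..n}. PP y j = PP x j + (if j = rlx x1 then 1 else 0) * (y - x))) \<and>
    (\<forall>j\<in>{1..n}. ((\<lambda>t. Pt t j) has_real_derivative gco (rlx x1) (rhx x1) j) (at_left x))"
proof -
  have xI: "x \<in> I" using x DD_sub by blast
  define c where "c = lo x1"
  define \<delta> where "\<delta> = dlt x1"
  define rl where "rl = rlx x1"
  define rh where "rh = rhx x1"
  define A where "A = Ax x1"
  have cx1: "c < x1" using comp_props(1)[OF x1(1,2)] unfolding c_def .
  have cm: "y \<in> cmpt x1" if "c < y" "y < x" for y
    using that x1 unfolding cmpt_def c_def by auto
  have dp: "\<delta> > 0" using dlt(1)[OF x1(1,2)] unfolding \<delta>_def .
  have rlh: "rl \<le> rh" using blk_facts(2)[OF x1(1,2)] unfolding rl_def rh_def .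
  have m: "\<delta> * Kf rl rh * real (mx x1) = x - c"
    using dlt(3)[OF x1(1,2) x1(4)] x1(5) unfolding \<delta>_def c_def rl_def rh_def Kx_def by simp
  have sub: "{x1..x} \<subseteq> I" using inI[OF x1(1) xI] by auto
  have Ptx: "Pt x j = A j + gco rl rh j * x" if j: "j \<in> {1..n}" for j
  proof (rule cont_ext_left[of I _ x1])
    show "continuous_on I (\<lambda>t. Pt t j)" using contPt j by blast
    show "x1 < x" "{x1..x} \<subseteq> I" using x1 sub by auto
    fix y assume "x1 < y" "y < x"
    hence "y \<in> cmpt x1" using cm cx1 by auto
    thus "Pt y j = A j + gco rl rh j * y" using Pt_aff[OF x1(1,2) _ j] unfolding A_def rl_def rh_def by blast
  qed
  note Qd = Q_at_d[OF dp rlh m]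
  obtain \<eta> where \<eta>: "\<eta> > 0" "\<forall>y. x - \<eta> < y \<and> y \<le> x \<longrightarrow>
     (\<forall>j. Qf A c \<delta> rl rh y j = Qf A c \<delta> rl rh x j + aL c \<delta> rl rh x j * (y - x))"
    using Q_left[OF dp, of x A c rl rh] by blast
  define e where "e = min \<eta> (x - c)"
  have ep: "e > 0" using \<eta> cx1 x1 unfolding e_def by auto
  show ?thesis
  proof (intro exI[of _ e] conjI ballI impI ep)
    fix y j assume y: "y \<in> I" "x - e < y \<and> y \<le> x" and j: "j \<in> {1..n}"
    have PPx: "PP x j = Pt x j" using x unfolding PP_def by simp
    show "PP y j = PP x j + (if j = rlx x1 then 1 else 0) * (y - x)"
    proof (cases "y = x")
      case True thus ?thesis by simp
    next
      case False
      hence yc: "y \<in> cmpt x1" using y cm unfolding e_def by auto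
      have yy: "x - \<eta> < y \<and> y \<le> x" using y unfolding e_def by auto
      have "PP y j = Qf A c \<delta> rl rh y j" using PP_comp[OF x1(1,2) yc j] unfolding A_def c_def \<delta>_def rl_def rh_def .
      also have "\<dots> = Qf A c \<delta> rl rh x j + aL c \<delta> rl rh x j * (y - x)" using \<eta>(2) yy by blast
      also have "\<dots> = PP x j + (if j = rlx x1 then 1 else 0) * (y - x)"
        using Qd Ptx[OF j] PPx unfolding rl_def by simp
      finally show ?thesis .
    qed
  next
    fix j assume j: "j \<in> {1..n}"
    show "((\<lambda>t. Pt t j) has_real_derivative gco (rlx x1) (rhx x1) j) (at_left x)"
    proof (rule deriv_left_affine)
      show "x - x1 > 0" using x1 by simp
      fix y assume y: "x - (x - x1) < y" "y < x"
      hence "y \<in> cmpt x1" using cm cx1 by auto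
      hence "Pt y j = A j + gco rl rh j * y" using Pt_aff[OF x1(1,2) _ j] unfolding A_def rl_def rh_def by blast
      thus "Pt y j = Pt x j + gco (rlx x1) (rhx x1) j * (y - x)" using Ptx[OF j] unfolding rl_def rh_def
        by (simp add: algebra_simps)
    qed
  qed
qed

lemma right_data:
  assumes x: "x \<in> DD" and x2: "x2 \<in> I" "x2 \<notin> DD" "x < x2" "lo x2 = x"
  shows "\<exists>e>0. (\<forall>y\<in>I. x \<le> y \<and> y < x + e \<longrightarrow>
      (\<forall>j\<in>{1..n}. PP y j = PP x j + (if j = rhx x2 then 1 else 0) * (y - x))) \<and>
    (\<forall>j\<in>{1..n}. ((\<lambda>t. Pt t j) has_real_derivative gco (rlx x2) (rhx x2) j) (at_right x))"
proof -
  have xI: "x \<in> I" using x DD_sub by blast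
  define \<delta> where "\<delta> = dlt x2"
  define rl where "rl = rlx x2"
  define rh where "rh = rhx x2"
  define A where "A = Ax x2"
  have x2c: "x2 \<in> cmpt x2" using comp_props(5)[OF x2(1,2)] .
  have cm: "y \<in> cmpt x2" if "x < y" "y \<le> x2" for y
    using that x2 x2c unfolding cmpt_def by auto
  have dp: "\<delta> > 0" using dlt(1)[OF x2(1,2)] unfolding \<delta>_def .
  have rlh: "rl \<le> rh" using blk_facts(2)[OF x2(1,2)] unfolding rl_def rh_def .
  have sub: "{x..x2} \<subseteq> I" using inI[OF xI x2(1)] by auto
  have Ptx: "Pt x j = A j + gco rl rh j * x" if j: "j \<in> {1..n}" for j
  proof (rule cont_ext_right[of I _ _ x2])
    show "continuous_on I (\<lambda>t. Pt t j)" using contPt j by blast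
    show "x < x2" "{x..x2} \<subseteq> I" using x2 sub by auto
    fix y assume "x < y" "y < x2"
    hence "y \<in> cmpt x2" using cm by auto
    thus "Pt y j = A j + gco rl rh j * y" using Pt_aff[OF x2(1,2) _ j] unfolding A_def rl_def rh_def by blast
  qed
  note Qc = Q_at_c[OF dp rlh]
  obtain \<eta> where \<eta>: "\<eta> > 0" "\<forall>y. x \<le> y \<and> y < x + \<eta> \<longrightarrow>
     (\<forall>j. Qf A x \<delta> rl rh y j = Qf A x \<delta> rl rh x j + aR x \<delta> rl rh x j * (y - x))"
    using Q_right[OF dp, of x A x rl rh] by blast
  define e where "e = min \<eta> (x2 - x)"
  have ep: "e > 0" using \<eta> x2 unfolding e_def by auto
  show ?thesis
  proof (intro exI[of _ e] conjI ballI impI ep)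
    fix y j assume y: "y \<in> I" "x \<le> y \<and> y < x + e" and j: "j \<in> {1..n}"
    have PPx: "PP x j = Pt x j" using x unfolding PP_def by simp
    show "PP y j = PP x j + (if j = rhx x2 then 1 else 0) * (y - x)"
    proof (cases "y = x")
      case True thus ?thesis by simp
    next
      case False
      hence yc: "y \<in> cmpt x2" using y cm unfolding e_def by auto
      have yy: "x \<le> y \<and> y < x + \<eta>" using y unfolding e_def by auto
      have "PP y j = Qf A x \<delta> rl rh y j" using PP_comp[OF x2(1,2) yc j] x2(4) unfolding A_def \<delta>_def rl_def rh_def by simp
      also have "\<dots> = Qf A x \<delta> rl rh x j + aR x \<delta> rl rh x j * (y - x)" using \<eta>(2) yy by blast
      also have "\<dots> = PP x j + (if j = rhx x2 then 1 else 0) * (y - x)"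
        using Qc Ptx[OF j] PPx unfolding rh_def by simp
      finally show ?thesis .
    qed
  next
    fix j assume j: "j \<in> {1..n}"
    show "((\<lambda>t. Pt t j) has_real_derivative gco (rlx x2) (rhx x2) j) (at_right x)"
    proof (rule deriv_right_affine)
      show "x2 - x > 0" using x2 by simp
      fix y assume y: "x < y" "y < x + (x2 - x)"
      hence "y \<in> cmpt x2" using cm by auto
      hence "Pt y j = A j + gco rl rh j * y" using Pt_aff[OF x2(1,2) _ j] unfolding A_def rl_def rh_def by blast
      thus "Pt y j = Pt x j + gco (rlx x2) (rhx x2) j * (y - x)" using Ptx[OF j] unfolding rl_def rh_def
        by (simp add: algebra_simps)
    qed
  qed
qed

end


context gsys begin

lemma left_side:
  assumes x: "x \<in> DD"
  shows "\<exists>eL>0. \<exists>\<alpha>. (\<forall>j\<in>{1..n}. \<alpha> j \<in> {0,1}) \<and>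
    (\<forall>y\<in>I. x - eL < y \<and> y \<le> x \<longrightarrow> (\<forall>j\<in>{1..n}. PP y j = PP x j + \<alpha> j * (y - x))) \<and>
    (x \<in> interior I \<longrightarrow> (\<exists>rl rh. 1 \<le> rl \<and> rl \<le> rh \<and> rh \<le> n \<and> (\<forall>j. \<alpha> j = (if j = rl then 1 else 0)) \<and>
       (\<forall>j\<in>{1..n}. ((\<lambda>t. Pt t j) has_real_derivative gco rl rh j) (at_left x))))"
proof (cases "\<exists>y0\<in>I. y0 < x")
  case True
  then obtain y0 where y0: "y0 \<in> I" "y0 < x" by blast
  obtain x1 where x1: "x1 \<in> I" "x1 \<notin> DD" "x1 < x" "fin x1" "hi x1 = x" using left_pt[OF x y0] by blast
  obtain e where e: "e > 0" "\<forall>y\<in>I. x - e < y \<and> y \<le> x \<longrightarrow>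
      (\<forall>j\<in>{1..n}. PP y j = PP x j + (if j = rlx x1 then 1 else 0) * (y - x))"
    "\<forall>j\<in>{1..n}. ((\<lambda>t. Pt t j) has_real_derivative gco (rlx x1) (rhx x1) j) (at_left x)"
    using left_data[OF x x1] by blast
  note bf = blk_facts[OF x1(1,2)]
  show ?thesis
    by (intro exI[of _ e] exI[of _ "\<lambda>j. if j = rlx x1 then 1 else 0"] conjI impI e(1) e(2)
          exI[of _ "rlx x1"] exI[of _ "rhx x1"] bf(1-3) e(3) allI) auto
next
  case False
  have ni: "x \<notin> interior I"
  proof
    assume "x \<in> interior I"
    then obtain r where r: "r > 0" "ball x r \<subseteq> I" by (meson mem_interior)
    hence "x - r/2 \<in> I" by (auto simp: dist_real_def subset_iff)
    thus False using False r by auto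
  qed
  show ?thesis
  proof (intro exI[of _ 1] exI[of _ "\<lambda>j. 0"] conjI ballI impI)
    fix y j assume y: "y \<in> I" "x - 1 < y \<and> y \<le> x"
    hence "y = x" using False by force
    thus "PP y j = PP x j + 0 * (y - x)" by simp
  qed (use ni in auto)
qed

lemma right_side:
  assumes x: "x \<in> DD"
  shows "\<exists>eR>0. \<exists>\<beta>. (\<forall>j\<in>{1..n}. \<beta> j \<in> {0,1}) \<and>
    (\<forall>y\<in>I. x \<le> y \<and> y < x + eR \<longrightarrow> (\<forall>j\<in>{1..n}. PP y j = PP x j + \<beta> j * (y - x))) \<and>
    (x \<in> interior I \<longrightarrow> (\<exists>sl sh. 1 \<le> sl \<and> sl \<le> sh \<and> sh \<le> n \<and> (\<forall>j. \<beta> j = (if j = sh then 1 else 0)) \<and>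
       (\<forall>j\<in>{1..n}. ((\<lambda>t. Pt t j) has_real_derivative gco sl sh j) (at_right x))))"
proof (cases "\<exists>y0\<in>I. x < y0")
  case True
  then obtain y0 where y0: "y0 \<in> I" "x < y0" by blast
  obtain x2 where x2: "x2 \<in> I" "x2 \<notin> DD" "x < x2" "lo x2 = x" using right_pt[OF x y0] by blast
  obtain e where e: "e > 0" "\<forall>y\<in>I. x \<le> y \<and> y < x + e \<longrightarrow>
      (\<forall>j\<in>{1..n}. PP y j = PP x j + (if j = rhx x2 then 1 else 0) * (y - x))"
    "\<forall>j\<in>{1..n}. ((\<lambda>t. Pt t j) has_real_derivative gco (rlx x2) (rhx x2) j) (at_right x)"
    using right_data[OF x x2] by blast
  note bf = blk_facts[OF x2(1,2)]
  show ?thesis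
    by (intro exI[of _ e] exI[of _ "\<lambda>j. if j = rhx x2 then 1 else 0"] conjI impI e(1) e(2)
          exI[of _ "rlx x2"] exI[of _ "rhx x2"] bf(1-3) e(3) allI) auto
next
  case False
  have ni: "x \<notin> interior I"
  proof
    assume "x \<in> interior I"
    then obtain r where r: "r > 0" "ball x r \<subseteq> I" by (meson mem_interior)
    hence "x + r/2 \<in> I" by (auto simp: dist_real_def subset_iff)
    thus False using False r by auto
  qed
  show ?thesis
  proof (intro exI[of _ 1] exI[of _ "\<lambda>j. 0"] conjI ballI impI)
    fix y j assume y: "y \<in> I" "x \<le> y \<and> y < x + 1"
    hence "y = x" using False by force
    thus "PP y j = PP x j + 0 * (y - x)" by simp
  qed (use ni in auto)
qed

lemma D_local:
  assumes x: "x \<in> DD"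
  shows "local_ok n I PP x"
proof -
  obtain eL \<alpha> where L: "eL > 0" "\<forall>j\<in>{1..n}. \<alpha> j \<in> {0,1}"
    "\<forall>y\<in>I. x - eL < y \<and> y \<le> x \<longrightarrow> (\<forall>j\<in>{1..n}. PP y j = PP x j + \<alpha> j * (y - x))"
    "x \<in> interior I \<longrightarrow> (\<exists>rl rh. 1 \<le> rl \<and> rl \<le> rh \<and> rh \<le> n \<and> (\<forall>j. \<alpha> j = (if j = rl then 1 else 0)) \<and>
       (\<forall>j\<in>{1..n}. ((\<lambda>t. Pt t j) has_real_derivative gco rl rh j) (at_left x)))"
    using left_side[OF x] by blast
  obtain eR \<beta> where R: "eR > 0" "\<forall>j\<in>{1..n}. \<beta> j \<in> {0,1}"
    "\<forall>y\<in>I. x \<le> y \<and> y < x + eR \<longrightarrow> (\<forall>j\<in>{1..n}. PP y j = PP x j + \<beta> j * (y - x))"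
    "x \<in> interior I \<longrightarrow> (\<exists>sl sh. 1 \<le> sl \<and> sl \<le> sh \<and> sh \<le> n \<and> (\<forall>j. \<beta> j = (if j = sh then 1 else 0)) \<and>
       (\<forall>j\<in>{1..n}. ((\<lambda>t. Pt t j) has_real_derivative gco sl sh j) (at_right x)))"
    using right_side[OF x] by blast
  have S3: "\<forall>a\<in>{1..n}. \<forall>b\<in>{1..n}. \<alpha> a = 1 \<and> \<beta> b = 1 \<and> a < b \<longrightarrow> (\<forall>j\<in>{a..b}. PP x j = PP x a)"
    if xi: "x \<in> interior I"
  proof (intro ballI impI)
    fix a b j assume ab: "a \<in> {1..n}" "b \<in> {1..n}" "\<alpha> a = 1 \<and> \<beta> b = 1 \<and> a < b" and j: "j \<in> {a..b}"
    obtain rl rh where l: "1 \<le> rl" "rl \<le> rh" "rh \<le> n" "\<forall>j. \<alpha> j = (if j = rl then 1 else 0)"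
       "\<forall>j\<in>{1..n}. ((\<lambda>t. Pt t j) has_real_derivative gco rl rh j) (at_left x)"
      using L(4) xi by blast
    obtain sl sh where r: "1 \<le> sl" "sl \<le> sh" "sh \<le> n" "\<forall>j. \<beta> j = (if j = sh then 1 else 0)"
       "\<forall>j\<in>{1..n}. ((\<lambda>t. Pt t j) has_real_derivative gco sl sh j) (at_right x)"
      using R(4) xi by blast
    have a: "a = rl" using ab(3) l(4) by (metis zero_neq_one)
    have b: "b = sh" using ab(3) r(4) by (metis zero_neq_one)
    have dl: "\<forall>j\<in>{1..n}. ((\<lambda>t. Pt t j) has_real_derivative
            (if rl \<le> j \<and> j \<le> rh then 1 / real (rh - rl + 1) else 0)) (at_left x)"
      using l(5) unfolding gco_def Kf_def .
    have dr: "\<forall>j\<in>{1..n}. ((\<lambda>t. Pt t j) has_real_derivative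
            (if sl \<le> j \<and> j \<le> sh then 1 / real (sh - sl + 1) else 0)) (at_right x)"
      using r(5) unfolding gco_def Kf_def .
    have rs: "rl < sh" using ab(3) a b by simp
    have hyp: "1 \<le> rl \<and> rl \<le> rh \<and> rh \<le> n \<and> 1 \<le> sl \<and> sl \<le> sh \<and> sh \<le> n \<and>
        (\<forall>j\<in>{1..n}. ((\<lambda>t. Pt t j) has_real_derivative
            (if rl \<le> j \<and> j \<le> rh then 1 / real (rh - rl + 1) else 0)) (at_left x)) \<and>
        (\<forall>j\<in>{1..n}. ((\<lambda>t. Pt t j) has_real_derivative
            (if sl \<le> j \<and> j \<le> sh then 1 / real (sh - sl + 1) else 0)) (at_right x)) \<and>
        rl < sh"
      using l(1-3) r(1-3) dl dr rs by blast
    have xq: "x \<in> interior I \<inter> DD" using xi x by blast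
    have "\<forall>j\<in>{rl..sh}. Pt x j = Pt x rl" using bspec[OF G3 xq, rule_format, OF hyp] by blast
    moreover have "j \<in> {rl..sh}" using j a b by simp
    ultimately have "Pt x j = Pt x rl" by blast
    moreover have "\<And>i. PP x i = Pt x i" using x unfolding PP_def by simp
    ultimately show "PP x j = PP x a" using a by simp
  qed
  have c1: "min eL eR > 0" using L(1) R(1) by simp
  have c2: "\<forall>j\<in>{1..n}. \<alpha> j \<in> {0,1} \<and> \<beta> j \<in> {0,1}" using L(2) R(2) by blast
  have c3: "\<forall>y\<in>I. x - min eL eR < y \<and> y \<le> x \<longrightarrow> (\<forall>j\<in>{1..n}. PP y j = PP x j + \<alpha> j * (y - x))"
    proof (intro ballI impI)
      fix y j assume "y \<in> I" "x - min eL eR < y \<and> y \<le> x" "j \<in> {1..n}"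
      hence "y \<in> I" "x - eL < y \<and> y \<le> x" "j \<in> {1..n}" by auto
      thus "PP y j = PP x j + \<alpha> j * (y - x)" using L(3) by blast
    qed
  have c4: "\<forall>y\<in>I. x \<le> y \<and> y < x + min eL eR \<longrightarrow> (\<forall>j\<in>{1..n}. PP y j = PP x j + \<beta> j * (y - x))"
    proof (intro ballI impI)
      fix y j assume "y \<in> I" "x \<le> y \<and> y < x + min eL eR" "j \<in> {1..n}"
      hence "y \<in> I" "x \<le> y \<and> y < x + eR" "j \<in> {1..n}" by auto
      thus "PP y j = PP x j + \<beta> j * (y - x)" using R(3) by blast
    qed
  have c5: "x \<in> interior I \<longrightarrow> (\<forall>a\<in>{1..n}. \<forall>b\<in>{1..n}. \<alpha> a = 1 \<and> \<beta> b = 1 \<and> a < b \<longrightarrow>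
        (\<forall>j\<in>{a..b}. PP x j = PP x a))" using S3 by blast
  show ?thesis unfolding local_ok_def using c1 c2 c3 c4 c5 by blast
qed

end


context gsys begin

lemma interior_local:
  assumes x: "x \<in> I" "x \<notin> DD"
  shows "local_ok n I PP x"
proof -
  define c where "c = lo x"
  define \<delta> where "\<delta> = dlt x"
  define rl where "rl = rlx x"
  define rh where "rh = rhx x"
  define A where "A = Ax x"
  note cp = comp_props[OF x]
  note bf = blk_facts[OF x]
  have dp: "\<delta> > 0" using dlt(1)[OF x] unfolding \<delta>_def .
  obtain \<eta>1 where \<eta>1: "\<eta>1 > 0" "\<forall>y. x - \<eta>1 < y \<and> y \<le> x \<longrightarrow>
     (\<forall>j. Qf A c \<delta> rl rh y j = Qf A c \<delta> rl rh x j + aL c \<delta> rl rh x j * (y - x))"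
    using Q_left[OF dp, of x A c rl rh] by blast
  obtain \<eta>2 where \<eta>2: "\<eta>2 > 0" "\<forall>y. x \<le> y \<and> y < x + \<eta>2 \<longrightarrow>
     (\<forall>j. Qf A c \<delta> rl rh y j = Qf A c \<delta> rl rh x j + aR c \<delta> rl rh x j * (y - x))"
    using Q_right[OF dp, of x A c rl rh] by blast
  define e where "e = min (min \<eta>1 \<eta>2) (min (x - c) (if fin x then hi x - x else 1))"
  have p1: "x - c > 0" using cp(1) unfolding c_def by simp
  have p2: "(if fin x then hi x - x else 1) > 0" using cp(2) by simp
  have ep: "e > 0" unfolding e_def using \<eta>1(1) \<eta>2(1) p1 p2 by simp
  have e1: "e \<le> x - c" unfolding e_def by simp
  have e2: "e \<le> hi x - x" if "fin x" unfolding e_def using that by simp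
  have inc: "y \<in> cmpt x" if "x - e < y" "y < x + e" for y
  proof -
    have "lo x < y" using that e1 unfolding c_def by linarith
    moreover have "fin x \<longrightarrow> y < hi x" using that e2 by force
    ultimately show ?thesis unfolding cmpt_def by simp
  qed
  have PPQ: "PP y j = Qf A c \<delta> rl rh y j" if "y \<in> cmpt x" "j \<in> {1..n}" for y j
    using PP_comp[OF x that] unfolding A_def c_def \<delta>_def rl_def rh_def .
  have c1: "\<forall>j\<in>{1..n}. aL c \<delta> rl rh x j \<in> {0,1} \<and> aR c \<delta> rl rh x j \<in> {0,1}" using aLR01 by blast
  have c3: "\<forall>y\<in>I. x - e < y \<and> y \<le> x \<longrightarrow> (\<forall>j\<in>{1..n}. PP y j = PP x j + aL c \<delta> rl rh x j * (y - x))"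
  proof (intro ballI impI)
    fix y j assume y: "y \<in> I" "x - e < y \<and> y \<le> x" and j: "j \<in> {1..n}"
    have yc: "y \<in> cmpt x" using inc y ep by auto
    have yy: "x - \<eta>1 < y \<and> y \<le> x" using y unfolding e_def by auto
    have "PP y j = Qf A c \<delta> rl rh y j" by (rule PPQ[OF yc j])
    also have "\<dots> = Qf A c \<delta> rl rh x j + aL c \<delta> rl rh x j * (y - x)" using \<eta>1(2) yy by blast
    also have "Qf A c \<delta> rl rh x j = PP x j" using PPQ[OF cp(5) j] by simp
    finally show "PP y j = PP x j + aL c \<delta> rl rh x j * (y - x)" .
  qed
  have c4: "\<forall>y\<in>I. x \<le> y \<and> y < x + e \<longrightarrow> (\<forall>j\<in>{1..n}. PP y j = PP x j + aR c \<delta> rl rh x j * (y - x))"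
  proof (intro ballI impI)
    fix y j assume y: "y \<in> I" "x \<le> y \<and> y < x + e" and j: "j \<in> {1..n}"
    have yc: "y \<in> cmpt x" using inc y ep by auto
    have yy: "x \<le> y \<and> y < x + \<eta>2" using y unfolding e_def by auto
    have "PP y j = Qf A c \<delta> rl rh y j" by (rule PPQ[OF yc j])
    also have "\<dots> = Qf A c \<delta> rl rh x j + aR c \<delta> rl rh x j * (y - x)" using \<eta>2(2) yy by blast
    also have "Qf A c \<delta> rl rh x j = PP x j" using PPQ[OF cp(5) j] by simp
    finally show "PP y j = PP x j + aR c \<delta> rl rh x j * (y - x)" .
  qed
  have Aeq: "\<forall>j\<in>{rl..rh}. A j = A rl"
  proof
    fix j assume j: "j \<in> {rl..rh}"
    have "Pt x j = Pt x rl" using bf(4)[OF cp(5)] j unfolding rl_def rh_def by blast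
    moreover have "gco rl rh j = gco rl rh rl" using j unfolding gco_def by auto
    ultimately show "A j = A rl" unfolding A_def Ax_def rl_def rh_def by simp
  qed
  have c5: "x \<in> interior I \<longrightarrow> (\<forall>a\<in>{1..n}. \<forall>b\<in>{1..n}. aL c \<delta> rl rh x a = 1 \<and> aR c \<delta> rl rh x b = 1 \<and> a < b \<longrightarrow>
        (\<forall>j\<in>{a..b}. PP x j = PP x a))"
  proof (intro impI ballI)
    fix a b j assume a: "a \<in> {1..n}" and b: "b \<in> {1..n}"
      and h: "aL c \<delta> rl rh x a = 1 \<and> aR c \<delta> rl rh x b = 1 \<and> a < b" and j: "j \<in> {a..b}"
    have "\<forall>j\<in>{a..b}. Qf A c \<delta> rl rh x j = Qf A c \<delta> rl rh x a"
      using Q_S3[OF dp Aeq] h by blast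
    hence "Qf A c \<delta> rl rh x j = Qf A c \<delta> rl rh x a" using j by blast
    moreover have "j \<in> {1..n}" using a b j by auto
    ultimately show "PP x j = PP x a" using PPQ[OF cp(5)] a by simp
  qed
  show ?thesis unfolding local_ok_def using ep c1 c3 c4 c5 by blast
qed

lemma PP_local: "x \<in> I \<Longrightarrow> local_ok n I PP x"
  using interior_local D_local by blast

lemma PP_approx:
  assumes y: "y \<in> I" and j: "j \<in> {1..n}"
  shows "\<bar>Pt y j - PP y j\<bar> \<le> eps"
proof (cases "y \<in> DD")
  case True thus ?thesis unfolding PP_def using eps by simp
next
  case False
  have "\<bar>corr (lo y) (dlt y) (rlx y) (rhx y) y j\<bar> \<le> dlt y" using corr_bound dlt(1)[OF y False] by blast
  thus ?thesis using PP_eq[OF y False, of j] dlt(2)[OF y False] by simp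
qed

end


context gsys begin

lemma PP_sys: "sys_cond1 n I PP"
  unfolding sys_cond1_def
proof (intro ballI)
  fix y assume yI: "y \<in> I"
  have S1z: "0 \<le> Pt t 1" if "t \<in> I" for t using S1 that unfolding sys_cond1_def by blast
  have S1o: "Pt t j \<le> Pt t (Suc j)" if "t \<in> I" "j \<in> {1..<n}" for t j
    using S1 that unfolding sys_cond1_def by blast
  have S1s: "(\<Sum>j=1..n. Pt t j) = t" if "t \<in> I" for t using S1 that unfolding sys_cond1_def by blast
  show "0 \<le> PP y 1 \<and> (\<forall>j\<in>{1..<n}. PP y j \<le> PP y (Suc j)) \<and> (\<Sum>j=1..n. PP y j) = y"
  proof (cases "y \<in> DD")
    case True
    have "PP y j = Pt y j" for j using True unfolding PP_def by simp
    thus ?thesis using S1z[OF yI] S1o[OF yI] S1s[OF yI] by simp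
  next
    case False
    note x = yI False
    define c where "c = lo y"
    define \<delta> where "\<delta> = dlt y"
    define rl where "rl = rlx y"
    define rh where "rh = rhx y"
    define A where "A = Ax y"
    define K where "K = Kf rl rh"
    note cp = comp_props[OF x]
    note bf = blk_facts[OF x]
    have dp: "\<delta> > 0" using dlt(1)[OF x] unfolding \<delta>_def .
    have K1: "K \<ge> 1" unfolding K_def by (rule Kf_ge)
    have rl1: "1 \<le> rl" and rlh: "rl \<le> rh" and rhn: "rh \<le> n" using bf(1-3) unfolding rl_def rh_def by auto
    have PPe: "PP y j = Pt y j + corr c \<delta> rl rh y j" for j
      using PP_eq[OF x] unfolding c_def \<delta>_def rl_def rh_def .
    have aff: "Pt t j = A j + gco rl rh j * t" if "t \<in> cmpt y" "j \<in> {1..n}" for t j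
      using Pt_aff[OF x that] unfolding A_def rl_def rh_def .
    have gin: "gco rl rh j = 1 / K" if "rl \<le> j" "j \<le> rh" for j using that unfolding gco_def K_def by simp
    have gout: "gco rl rh j = 0" if "\<not> (rl \<le> j \<and> j \<le> rh)" for j using that unfolding gco_def by auto
    have c0: "corr c \<delta> rl rh y j = 0" if "\<not> (rl \<le> j \<and> j \<le> rh \<and> rl < rh)" for j
      using that unfolding corr_def by auto
    have yc: "y \<in> cmpt y" by (rule cp(5))
    have cy: "c < y" using cp(1) unfolding c_def .
    have tin: "t \<in> cmpt y" if "c < t" "t \<le> y" for t
      using that yc unfolding cmpt_def c_def by auto
    have tI: "t \<in> I" if "t \<in> cmpt y" for t using that cp(3) by blast
    have sum: "(\<Sum>j=1..n. PP y j) = y"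
    proof -
      have "(\<Sum>j=1..n. PP y j) = (\<Sum>j=1..n. Pt y j) + (\<Sum>j=1..n. corr c \<delta> rl rh y j)"
        unfolding PPe by (simp add: sum.distrib)
      also have "(\<Sum>j=1..n. corr c \<delta> rl rh y j) = 0"
        by (rule corr_sum[OF dp rlh]) (use rl1 rhn in auto)
      finally show ?thesis using S1s[OF yI] by simp
    qed
    have Ay: "Pt y j = A j + gco rl rh j * y" if "j \<in> {1..n}" for j using aff[OF yc that] .
    have low: "PP y rl \<ge> A rl + (1/K) * c" if "rl < rh"
    proof -
      have cb: "corr c \<delta> rl rh y rl \<ge> - (y - c) / K" using corr_bot[OF dp that, of c y] cy unfolding K_def by simp
      have pr: "Pt y rl = A rl + (1/K) * y" using Ay[of rl] gin[of rl] rl1 rlh rhn by simp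
      have eq: "(1/K) * y + (- (y - c) / K) = (1/K) * c" using K1 by (simp add: field_simps)
      show ?thesis unfolding PPe pr using cb eq by linarith
    qed
    have L0: "0 \<le> A rl + (1/K) * c" if "rl = 1"
    proof (rule lim_right_le[of "y - c"])
      show "y - c > 0" using cy by simp
      fix t assume t: "c < t" "t < c + (y - c)"
      hence tc: "t \<in> cmpt y" using tin by auto
      have "(1::nat) \<in> {1..n}" using n2 by simp
      hence "Pt t 1 = A 1 + gco rl rh 1 * t" by (rule aff[OF tc])
      moreover have "gco rl rh 1 = 1/K" using gin[of 1] that rlh by simp
      ultimately show "0 \<le> A rl + 1 / K * t" using S1z[OF tI[OF tc]] that by simp
    qed
    have L1: "A (rl - 1) \<le> A rl + (1/K) * c" if "1 < rl"
    proof (rule lim_right_le[of "y - c"])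
      show "y - c > 0" using cy by simp
      fix t assume t: "c < t" "t < c + (y - c)"
      hence tc: "t \<in> cmpt y" using tin by auto
      have j1: "rl - 1 \<in> {1..<n}" using that rlh rhn by auto
      have "Pt t (rl - 1) \<le> Pt t (Suc (rl - 1))" using S1o[OF tI[OF tc] j1] .
      moreover have "Suc (rl - 1) = rl" using that by simp
      moreover have "Pt t (rl - 1) = A (rl - 1)" using aff[OF tc, of "rl - 1"] gout[of "rl - 1"] j1 that by auto
      moreover have "Pt t rl = A rl + (1/K) * t" using aff[OF tc, of rl] gin[of rl] rl1 rlh rhn by simp
      ultimately show "A (rl - 1) \<le> A rl + 1 / K * t" by simp
    qed
    have R1: "fin y \<and> A rh + (1/K) * hi y \<le> A (Suc rh)" if "rh < n"
    proof -
      have j1: "rh \<in> {1..<n}" using that rl1 rlh by auto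
      have ord: "A rh + (1/K) * t \<le> A (Suc rh)" if "t \<in> cmpt y" for t
      proof -
        have "Pt t rh \<le> Pt t (Suc rh)" using S1o[OF tI[OF that] j1] .
        moreover have "Pt t rh = A rh + (1/K) * t" using aff[OF that, of rh] gin[of rh] rl1 rlh rhn by simp
        moreover have "Pt t (Suc rh) = A (Suc rh)" using aff[OF that, of "Suc rh"] gout[of "Suc rh"] j1 by auto
        ultimately show ?thesis by simp
      qed
      have f: "fin y"
      proof (rule ccontr)
        assume nf: "\<not> fin y"
        define d where "d = A (Suc rh) - A rh"
        define t where "t = y + K * \<bar>d\<bar> + K"
        have kd: "0 \<le> K * \<bar>d\<bar>" using K1 by simp
        have "c < t" unfolding t_def using cy K1 kd by linarith
        hence "t \<in> cmpt y" using nf unfolding cmpt_def c_def by auto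
        hence "A rh + (1/K) * t \<le> A (Suc rh)" by (rule ord)
        moreover have "(1/K) * t = y / K + \<bar>d\<bar> + 1" unfolding t_def using K1 by (simp add: field_simps)
        moreover have "y / K \<ge> 0" using yI Ipos K1 by auto
        ultimately show False unfolding d_def by linarith
      qed
      have hy: "y < hi y" using cp(2) f .
      have "A rh + (1/K) * hi y \<le> A (Suc rh)"
      proof (rule lim_left_le[of "hi y - y"])
        show "hi y - y > 0" using hy by simp
        fix t assume t: "hi y - (hi y - y) < t" "t < hi y"
        hence "t \<in> cmpt y" using f cy unfolding cmpt_def c_def by auto
        thus "A rh + 1 / K * t \<le> A (Suc rh)" by (rule ord)
      qed
      thus ?thesis using f by simp
    qed
    have topb: "PP y rh \<le> A rh + (1/K) * hi y" if "rl < rh" "fin y"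
    proof -
      have m: "\<delta> * Kf rl rh * real (mx y) = hi y - c"
        using dlt(3)[OF x that(2)] unfolding \<delta>_def c_def rl_def rh_def Kx_def by simp
      have hy: "y \<le> hi y" using cp(2) that(2) by simp
      have "corr c \<delta> rl rh y rh \<le> (hi y - y) / K" using corr_top[OF dp that(1) m hy] unfolding K_def .
      moreover have pr: "Pt y rh = A rh + (1/K) * y" using Ay[of rh] gin[of rh] rl1 rlh rhn by simp
      moreover have "(1/K) * y + (hi y - y) / K = (1/K) * hi y" using K1 by (simp add: field_simps)
      ultimately show ?thesis unfolding PPe pr by linarith
    qed
    have nonneg: "0 \<le> PP y 1"
    proof (cases "rl = 1 \<and> rl < rh")
      case True
      thus ?thesis using low L0 by force
    next
      case False
      hence "corr c \<delta> rl rh y 1 = 0" using rl1 by (intro c0) auto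
      thus ?thesis using S1z[OF yI] unfolding PPe by simp
    qed
    have ordr: "PP y j \<le> PP y (Suc j)" if j: "j \<in> {1..<n}" for j
    proof (cases "rl < rh")
      case False
      hence "corr c \<delta> rl rh y j = 0" "corr c \<delta> rl rh y (Suc j) = 0" by (auto intro: c0)
      thus ?thesis using S1o[OF yI j] unfolding PPe by simp
    next
      case rlt: True
      consider (both) "rl \<le> j \<and> Suc j \<le> rh" | (none) "\<not> (rl \<le> j \<and> j \<le> rh)" "\<not> (rl \<le> Suc j \<and> Suc j \<le> rh)"
        | (top) "j = rh" | (bot) "Suc j = rl" by linarith
      thus ?thesis
      proof cases
        case both
        have m1: "j \<in> {rlx y..rhx y}" "Suc j \<in> {rlx y..rhx y}" using both unfolding rl_def rh_def by auto
        have "Pt y j = Pt y rl" "Pt y (Suc j) = Pt y rl" unfolding rl_def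
          by (rule bf(4)[OF yc m1(1)], rule bf(4)[OF yc m1(2)])
        moreover have "corr c \<delta> rl rh y j \<le> corr c \<delta> rl rh y (Suc j)" using corr_mono[OF dp] both by blast
        ultimately show ?thesis unfolding PPe by simp
      next
        case none
        hence "corr c \<delta> rl rh y j = 0" "corr c \<delta> rl rh y (Suc j) = 0" by (auto intro: c0)
        thus ?thesis using S1o[OF yI j] unfolding PPe by simp
      next
        case top
        have rn: "rh < n" using j top by auto
        have f: "fin y" and b: "A rh + (1/K) * hi y \<le> A (Suc rh)" using R1[OF rn] by auto
        have "PP y (Suc rh) = A (Suc rh)"
        proof -
          have "corr c \<delta> rl rh y (Suc rh) = 0" by (intro c0) auto
          moreover have "Pt y (Suc rh) = A (Suc rh)" using Ay[of "Suc rh"] gout[of "Suc rh"] rn by auto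
          ultimately show ?thesis unfolding PPe by simp
        qed
        thus ?thesis using top[symmetric] topb[OF rlt f] b by simp
      next
        case bot
        have r1: "1 < rl" using j bot by auto
        have "PP y j = A j"
        proof -
          have "corr c \<delta> rl rh y j = 0" using bot by (intro c0) auto
          moreover have "Pt y j = A j" using Ay[of j] gout[of j] j bot by auto
          ultimately show ?thesis unfolding PPe by simp
        qed
        moreover have "j = rl - 1" using bot by simp
        ultimately show ?thesis using L1[OF r1] low[OF rlt] bot by simp
      qed
    qed
    show ?thesis using nonneg ordr sum by blast
  qed
qed

end

theorem mainTheorem6:
  fixes n :: nat and I :: "real set" and Pt :: "real \<Rightarrow> nat \<Rightarrow> real" and \<epsilon> :: real
  assumes "n \<ge> 2"
    and "is_interval I" and "I \<subseteq> {0..}" and "interior I \<noteq> {}"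
    and "gen_n_system n I Pt"
    and "\<epsilon> > 0"
  shows "\<exists>P. n_system n I P \<and> (\<forall>q\<in>I. \<forall>j\<in>{1..n}. \<bar>Pt q j - P q j\<bar> \<le> \<epsilon>)"
proof -
  have "gsys n I Pt \<epsilon>" using assms unfolding gsys_def by blast
  then interpret g: gsys n I Pt \<epsilon> .
  show ?thesis
  proof (intro exI[of _ g.PP] conjI ballI)
    show "n_system n I g.PP"
      by (rule n_system_from_local[OF assms(2,4) g.PP_sys]) (use g.PP_local in blast)
    fix q j assume "q \<in> I" "j \<in> {1..n}"
    thus "\<bar>Pt q j - g.PP q j\<bar> \<le> \<epsilon>" by (rule g.PP_approx)
  qed
qed


end
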